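(* Let $\alpha>0$, $A>0$, $k\ge2$ and $a\ge1$. Then \[ \lambda_k(I_{A^{1/2}a},\alpha)+\lambda_1(I_{A^{1/2}/a},\alpha)\ge\lambda_1(Q_{(A/k)^{1/2}},\alpha)=\lambda_k(S_k,\alpha). \]
   Context: For a bounded open set $\Omega\subset\mathbb{R}^d$ ($d=1,2$) with Lipschitz boundary (possibly disconnected) and $\alpha>0$, $\lambda_1(\Omega,\alpha)\le\lambda_2(\Omega,\alpha)\le\cdots$ denote the eigenvalues, counted with multiplicity, of the Robin Laplacian $-\Delta u=\lambda u$, $\partial_\nu u+\alpha u=0$ on $\partial\Omega$ (defined via the form $\int_\Omega\nabla u\cdot\overline{\nabla v}+\alpha\int_{\partial\Omega}u\overline v$ on $H^1(\Omega)$). $I_b$ is an interval of length $b$; $Q_s$ is a square of side length $s$; $S_k$ is the disjoint union of $k$ equal squares of total area $A$. The left-hand side is the eigenvalue of the rectangle with sides $A^{1/2}a$, $A^{1/2}/a$ associated with its $(k,1)$ mode. *)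

theory Defs
  imports "HOL-Analysis.Analysis"
begin

definition lincomb :: "(nat \<Rightarrow> 'a \<Rightarrow> real) \<Rightarrow> (nat \<Rightarrow> real) \<Rightarrow> nat \<Rightarrow> 'a \<Rightarrow> real" where
  "lincomb f c k = (\<lambda>x. \<Sum>i<k. c i * f i x)"

text \<open>k-th min-max value: infimum over k-dimensional subspaces (spanned by k test functions,
  linearly independent in the L2 sense) of the maximum of the Rayleigh quotient Q/M.\<close>
definition minmax_level :: "(('a \<Rightarrow> real) \<Rightarrow> bool) \<Rightarrow> (('a \<Rightarrow> real) \<Rightarrow> real)
    \<Rightarrow> (('a \<Rightarrow> real) \<Rightarrow> real) \<Rightarrow> nat \<Rightarrow> real" where
  "minmax_level T Q M k =
     Inf { Sup { Q (lincomb f c k) / M (lincomb f c k) | c. \<exists>i<k. c i \<noteq> 0 }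
         | f. (\<forall>i<k. T (f i)) \<and> (\<forall>c. (\<exists>i<k. c i \<noteq> 0) \<longrightarrow> M (lincomb f c k) > 0) }"

definition robin_form_int :: "real \<Rightarrow> real \<Rightarrow> (real \<Rightarrow> real) \<Rightarrow> real" where
  "robin_form_int \<alpha> b u = integral {0..b} (\<lambda>x. (deriv u x)\<^sup>2) + \<alpha> * ((u 0)\<^sup>2 + (u b)\<^sup>2)"

definition mass_int :: "real \<Rightarrow> (real \<Rightarrow> real) \<Rightarrow> real" where
  "mass_int b u = integral {0..b} (\<lambda>x. (u x)\<^sup>2)"

definition robin_eig_interval :: "real \<Rightarrow> real \<Rightarrow> nat \<Rightarrow> real" where
  "robin_eig_interval \<alpha> b k =
     minmax_level (\<lambda>u. u C1_differentiable_on UNIV) (robin_form_int \<alpha> b) (mass_int b) k"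

definition C1_plane :: "(real \<times> real \<Rightarrow> real) \<Rightarrow> bool" where
  "C1_plane u \<longleftrightarrow> (\<exists>D :: real \<times> real \<Rightarrow> (real \<times> real) \<Rightarrow>\<^sub>L real.
      (\<forall>x. (u has_derivative blinfun_apply (D x)) (at x)) \<and> continuous_on UNIV D)"

definition grad_sq :: "(real \<times> real \<Rightarrow> real) \<Rightarrow> real \<times> real \<Rightarrow> real" where
  "grad_sq u x = (frechet_derivative u (at x) (1,0))\<^sup>2 + (frechet_derivative u (at x) (0,1))\<^sup>2"

definition robin_form_sq :: "real \<Rightarrow> real \<Rightarrow> real \<Rightarrow> (real \<times> real \<Rightarrow> real) \<Rightarrow> real" where
  "robin_form_sq \<alpha> p s u =
     integral (cbox (p,0) (p+s,s)) (grad_sq u)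
     + \<alpha> * (integral {0..s} (\<lambda>t. (u (p+t,0))\<^sup>2) + integral {0..s} (\<lambda>t. (u (p+t,s))\<^sup>2)
           + integral {0..s} (\<lambda>t. (u (p,t))\<^sup>2) + integral {0..s} (\<lambda>t. (u (p+s,t))\<^sup>2))"

definition mass_sq :: "real \<Rightarrow> real \<Rightarrow> (real \<times> real \<Rightarrow> real) \<Rightarrow> real" where
  "mass_sq p s u = integral (cbox (p,0) (p+s,s)) (\<lambda>x. (u x)\<^sup>2)"

text \<open>lambda_j of the disjoint union of m squares of side s, the i-th being
  (2 i s, 2 i s + s) x (0,s) (pairwise disjoint closures).  For m = 1 this is the square Q_s.\<close>
definition robin_eig_squares :: "real \<Rightarrow> nat \<Rightarrow> real \<Rightarrow> nat \<Rightarrow> real" where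
  "robin_eig_squares \<alpha> m s j =
     minmax_level C1_plane (\<lambda>u. \<Sum>i<m. robin_form_sq \<alpha> (2 * real i * s) s u)
                            (\<lambda>u. \<Sum>i<m. mass_sq (2 * real i * s) s u) j"

end

theory Submission
  imports Defs
begin


definition qf :: "(nat \<Rightarrow> nat \<Rightarrow> real) \<Rightarrow> nat \<Rightarrow> (nat \<Rightarrow> real) \<Rightarrow> real" where
  "qf m n c = (\<Sum>i<n. \<Sum>j<n. c i * c j * m i j)"

lemma qf_cong: "(\<And>i. i < n \<Longrightarrow> c i = c' i) \<Longrightarrow> qf m n c = qf m n c'"
  unfolding qf_def by (intro sum.cong refl) auto

lemma qf_add: "qf (\<lambda>i j. A i j + B i j) n c = qf A n c + qf B n c"
  unfolding qf_def by (simp add: algebra_simps sum.distrib)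

lemma qf_scale: "qf (\<lambda>i j. r * A i j) n c = r * qf A n c"
  unfolding qf_def by (simp add: algebra_simps sum_distrib_left)

lemma qf_sum: "finite L \<Longrightarrow> qf (\<lambda>i j. \<Sum>l\<in>L. A l i j) n c = (\<Sum>l\<in>L. qf (A l) n c)"
  unfolding qf_def by (simp add: sum_distrib_left sum.swap[of _ L])

lemma qf_sym: "qf m n c = qf (\<lambda>i j. (m i j + m j i) / 2) n c"
proof -
  have "(\<Sum>i<n. \<Sum>j<n. c i * c j * m j i) = (\<Sum>i<n. \<Sum>j<n. c i * c j * m i j)"
    by (subst sum.swap) (simp add: mult.commute mult.left_commute)
  moreover have "qf (\<lambda>i j. (m i j + m j i) / 2) n c = (\<Sum>i<n. \<Sum>j<n. c i * c j * m i j) / 2 + (\<Sum>i<n. \<Sum>j<n. c i * c j * m j i) / 2"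
    unfolding qf_def by (simp add: sum_divide_distrib sum.distrib ring_distribs add_divide_distrib)
  ultimately show ?thesis unfolding qf_def by simp
qed

lemma point_quad: "(\<Sum>i<n. c i * a i)\<^sup>2 = qf (\<lambda>i j. a i * a j) n c"
  unfolding qf_def power2_eq_square sum_product by (simp add: algebra_simps)

lemma qf_Suc:
  assumes "\<And>i j. m i j = m j i"
  shows "qf m (Suc n) c = qf m n c + 2 * c n * (\<Sum>i<n. c i * m i n) + (c n)\<^sup>2 * m n n"
proof -
  have "qf m (Suc n) c = (\<Sum>i<n. (\<Sum>j<n. c i * c j * m i j) + c i * c n * m i n)
      + ((\<Sum>j<n. c n * c j * m n j) + c n * c n * m n n)"
    unfolding qf_def by (simp only: sum.lessThan_Suc)
  also have "\<dots> = qf m n c + (\<Sum>i<n. c i * c n * m i n) + (\<Sum>j<n. c n * c j * m n j) + c n * c n * m n n"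
    unfolding qf_def by (simp only: sum.distrib add.assoc)
  also have "(\<Sum>j<n. c n * c j * m n j) = c n * (\<Sum>i<n. c i * m i n)"
    unfolding sum_distrib_left by (intro sum.cong refl) (simp add: assms[of n])
  also have "(\<Sum>i<n. c i * c n * m i n) = c n * (\<Sum>i<n. c i * m i n)"
    unfolding sum_distrib_left by (intro sum.cong refl) simp
  finally show ?thesis by (simp add: power2_eq_square)
qed

lemma qf_schur:
  "qf (\<lambda>i j. m i j - m i n * m j n / d) n c = qf m n c - (\<Sum>i<n. c i * m i n)\<^sup>2 / d"
proof -
  have "(\<Sum>i<n. c i * m i n)\<^sup>2 = (\<Sum>i<n. \<Sum>j<n. c i * c j * (m i n * m j n))"
    unfolding power2_eq_square sum_product by (intro sum.cong refl) (simp add: algebra_simps)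
  moreover have "qf (\<lambda>i j. m i j - m i n * m j n / d) n c = qf m n c - (\<Sum>i<n. \<Sum>j<n. c i * c j * (m i n * m j n)) / d"
    unfolding qf_def sum_divide_distrib sum_subtractf[symmetric]
    by (intro sum.cong refl) (simp add: right_diff_distrib)
  ultimately show ?thesis by simp
qed

lemma sq_diff_le: "(w - x)\<^sup>2 \<le> 2 * w\<^sup>2 + 2 * (x::real)\<^sup>2"
proof -
  have "0 \<le> (w + x)\<^sup>2" by simp
  then show ?thesis by (simp add: power2_eq_square algebra_simps)
qed

lemma posdef_sym:
  assumes "\<And>i j. m i j = m j i"
    and "\<And>c. (\<exists>i<n. c i \<noteq> 0) \<Longrightarrow> qf m n c > 0"
  shows "\<exists>e>0. \<forall>c. qf m n c \<ge> e * (\<Sum>i<n. (c i)\<^sup>2)"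
  using assms
proof (induction n arbitrary: m)
  case 0
  then show ?case by (intro exI[of _ 1]) (simp add: qf_def)
next
  case (Suc n)
  note sym = Suc.prems(1)
  define d where "d = m n n"
  have "d > 0"
  proof -
    define c0 :: "nat \<Rightarrow> real" where "c0 = (\<lambda>i. if i = n then 1 else 0)"
    have "qf m (Suc n) c0 > 0" using Suc.prems(2)[of c0] by (auto simp: c0_def)
    moreover have "qf m n c0 = 0" by (simp add: qf_def c0_def)
    moreover have "(\<Sum>i<n. c0 i * m i n) = 0" by (simp add: c0_def)
    ultimately show ?thesis using qf_Suc[of m n c0, OF sym] by (simp add: c0_def d_def)
  qed
  define m' where "m' = (\<lambda>i j. m i j - m i n * m j n / d)"
  have sym': "\<And>i j. m' i j = m' j i" unfolding m'_def using sym by (simp add: mult.commute)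
  have key: "qf m (Suc n) c = qf m' n c + d * (c n + (\<Sum>i<n. c i * m i n) / d)\<^sup>2" for c
  proof -
    define b where "b = (\<Sum>i<n. c i * m i n)"
    have "qf m' n c = qf m n c - b\<^sup>2 / d" unfolding m'_def b_def by (rule qf_schur)
    moreover have "qf m (Suc n) c = qf m n c + 2 * c n * b + (c n)\<^sup>2 * d"
      unfolding b_def d_def by (rule qf_Suc[OF sym])
    moreover have "d * (c n + b / d)\<^sup>2 = d * (c n)\<^sup>2 + 2 * c n * b + b\<^sup>2 / d"
      using \<open>d > 0\<close> by (simp add: power2_eq_square field_simps)
    ultimately show ?thesis unfolding b_def[symmetric] by (simp add: algebra_simps)
  qed
  have pos': "qf m' n c > 0" if "\<exists>i<n. c i \<noteq> 0" for c
  proof -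
    define ct where "ct = c(n := - (\<Sum>i<n. c i * m i n) / d)"
    have e1: "qf m' n ct = qf m' n c" by (rule qf_cong) (simp add: ct_def)
    have e2: "(\<Sum>i<n. ct i * m i n) = (\<Sum>i<n. c i * m i n)" by (intro sum.cong) (auto simp: ct_def)
    have "qf m (Suc n) ct > 0" using that by (intro Suc.prems(2)) (auto simp: ct_def)
    then have "qf m' n ct > 0" using key[of ct] e2 \<open>d > 0\<close> by (simp add: ct_def)
    then show ?thesis using e1 by simp
  qed
  obtain e' where e': "e' > 0" "\<And>c. qf m' n c \<ge> e' * (\<Sum>i<n. (c i)\<^sup>2)"
    using Suc.IH[OF sym' pos'] by blast
  define K where "K = (\<Sum>i<n. (m i n)\<^sup>2)"
  have K0: "K \<ge> 0" unfolding K_def by (simp add: sum_nonneg)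
  define e where "e = min (e' / (1 + 2 * K / d\<^sup>2)) (d / 2)"
  have epos: "e > 0" unfolding e_def using e' \<open>d > 0\<close> K0 by (simp add: add_pos_nonneg)
  have "qf m (Suc n) c \<ge> e * (\<Sum>i<Suc n. (c i)\<^sup>2)" for c
  proof -
    define b where "b = (\<Sum>i<n. c i * m i n)"
    define S where "S = (\<Sum>i<n. (c i)\<^sup>2)"
    define w where "w = c n + b / d"
    have S0: "S \<ge> 0" unfolding S_def by (simp add: sum_nonneg)
    have bK: "b\<^sup>2 \<le> S * K" unfolding b_def S_def K_def by (rule Cauchy_Schwarz_ineq_sum)
    have t2: "(c n)\<^sup>2 \<le> 2 * w\<^sup>2 + 2 * (b / d)\<^sup>2"
    proof -
      have "c n = w - b / d" unfolding w_def by simp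
      then have "(c n)\<^sup>2 = (w - b/d)\<^sup>2" by simp
      also have "\<dots> \<le> 2 * w\<^sup>2 + 2 * (b / d)\<^sup>2" by (rule sq_diff_le)
      finally show ?thesis .
    qed
    have bd: "(b / d)\<^sup>2 \<le> S * K / d\<^sup>2"
      using bK \<open>d > 0\<close> by (simp add: power_divide divide_right_mono)
    have Q: "qf m (Suc n) c = qf m' n c + d * w\<^sup>2" unfolding w_def b_def by (rule key)
    have sumS: "(\<Sum>i<Suc n. (c i)\<^sup>2) = S + (c n)\<^sup>2" unfolding S_def by simp
    have "e * (S + (c n)\<^sup>2) \<le> e * (S + 2 * w\<^sup>2 + 2 * (S * K / d\<^sup>2))"
      using t2 bd epos by (intro mult_left_mono) auto
    also have "\<dots> = e * (1 + 2 * K / d\<^sup>2) * S + (2 * e) * w\<^sup>2"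
      by (simp add: algebra_simps)
    also have "\<dots> \<le> e' * S + d * w\<^sup>2"
    proof (rule add_mono)
      have "e * (1 + 2 * K / d\<^sup>2) \<le> e'"
      proof -
        have pos: "1 + 2 * K / d\<^sup>2 > 0" using K0 \<open>d>0\<close> by (simp add: add_pos_nonneg)
        have "e \<le> e' / (1 + 2 * K / d\<^sup>2)" unfolding e_def by simp
        then show ?thesis using pos by (simp add: le_divide_eq)
      qed
      then show "e * (1 + 2 * K / d\<^sup>2) * S \<le> e' * S" using S0 by (rule mult_right_mono)
      have "2 * e \<le> d" unfolding e_def by simp
      then show "2 * e * w\<^sup>2 \<le> d * w\<^sup>2" by (rule mult_right_mono) simp
    qed
    also have "\<dots> \<le> qf m (Suc n) c" using Q e'(2)[of c] unfolding S_def by simp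
    finally show ?thesis using sumS by simp
  qed
  then show ?case using epos by blast
qed

lemma posdef:
  assumes "\<And>c. (\<exists>i<n. c i \<noteq> 0) \<Longrightarrow> qf m n c > 0"
  shows "\<exists>e>0. \<forall>c. qf m n c \<ge> e * (\<Sum>i<n. (c i)\<^sup>2)"
proof -
  let ?ms = "\<lambda>i j. (m i j + m j i) / 2"
  have "\<exists>e>0. \<forall>c. qf ?ms n c \<ge> e * (\<Sum>i<n. (c i)\<^sup>2)"
    by (rule posdef_sym) (auto simp: add.commute qf_sym[symmetric] assms)
  then show ?thesis by (simp add: qf_sym[symmetric])
qed

lemma qf_upper: "qf q n c \<le> (\<Sum>i<n. \<Sum>j<n. \<bar>q i j\<bar>) * (\<Sum>i<n. (c i)\<^sup>2)"
proof -
  define S where "S = (\<Sum>i<n. (c i)\<^sup>2)"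
  have sq: "(c i)\<^sup>2 \<le> S" if "i < n" for i
    unfolding S_def by (rule member_le_sum) (use that in auto)
  have "qf q n c \<le> (\<Sum>i<n. \<Sum>j<n. \<bar>q i j\<bar> * S)"
    unfolding qf_def
  proof (intro sum_mono)
    fix i j assume ij: "i \<in> {..<n}" "j \<in> {..<n}"
    have "\<bar>c i * c j\<bar> \<le> S"
    proof -
      have "\<bar>c i * c j\<bar> \<le> ((c i)\<^sup>2 + (c j)\<^sup>2) / 2"
        using sum_squares_ge_zero[of "\<bar>c i\<bar> - \<bar>c j\<bar>" 0]
        by (simp add: power2_eq_square algebra_simps abs_mult)
      also have "\<dots> \<le> S" using sq[of i] sq[of j] ij by auto
      finally show ?thesis .
    qed
    then have "c i * c j * q i j \<le> \<bar>c i * c j\<bar> * \<bar>q i j\<bar>"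
      by (metis abs_ge_self abs_mult)
    also have "\<dots> \<le> S * \<bar>q i j\<bar>" using \<open>\<bar>c i * c j\<bar> \<le> S\<close> by (intro mult_right_mono) auto
    finally show "c i * c j * q i j \<le> \<bar>q i j\<bar> * S" by (simp add: mult.commute)
  qed
  also have "\<dots> = (\<Sum>i<n. \<Sum>j<n. \<bar>q i j\<bar>) * S" by (simp add: sum_distrib_right)
  finally show ?thesis unfolding S_def .
qed

lemma rayleigh_bdd:
  assumes "\<And>c. (\<exists>i<n. c i \<noteq> 0) \<Longrightarrow> qf m n c > 0"
  shows "\<exists>B. \<forall>c. (\<exists>i<n. c i \<noteq> 0) \<longrightarrow> qf q n c / qf m n c \<le> B"
proof -
  obtain e where e: "e > 0" "\<And>c. qf m n c \<ge> e * (\<Sum>i<n. (c i)\<^sup>2)" using posdef[OF assms] by blast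
  define K where "K = (\<Sum>i<n. \<Sum>j<n. \<bar>q i j\<bar>)"
  have K0: "K \<ge> 0" unfolding K_def by (simp add: sum_nonneg)
  show ?thesis
  proof (intro exI[of _ "K / e"] allI impI)
    fix c :: "nat \<Rightarrow> real" assume c: "\<exists>i<n. c i \<noteq> 0"
    define S where "S = (\<Sum>i<n. (c i)\<^sup>2)"
    have S0: "S > 0"
    proof -
      obtain i where i: "i < n" "c i \<noteq> 0" using c by blast
      show ?thesis unfolding S_def by (rule sum_pos2[of _ i]) (use i in auto)
    qed
    have M: "qf m n c \<ge> e * S" using e(2) unfolding S_def by simp
    have Mp: "qf m n c > 0" using assms[OF c] .
    have "qf q n c \<le> K * S" unfolding K_def S_def by (rule qf_upper)
    then have "qf q n c / qf m n c \<le> K * S / qf m n c" using Mp by (simp add: divide_right_mono)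
    also have "\<dots> \<le> K * S / (e * S)" using M K0 S0 e(1) Mp
      by (intro divide_left_mono) (auto intro: mult_nonneg_nonneg)
    also have "\<dots> = K / e" using S0 by simp
    finally show "qf q n c / qf m n c \<le> K / e" .
  qed
qed


definition adm :: "(('a \<Rightarrow> real) \<Rightarrow> bool) \<Rightarrow> (('a \<Rightarrow> real) \<Rightarrow> real) \<Rightarrow> nat \<Rightarrow> (nat \<Rightarrow> 'a \<Rightarrow> real) \<Rightarrow> bool" where
  "adm T M k f \<longleftrightarrow> (\<forall>i<k. T (f i)) \<and> (\<forall>c. (\<exists>i<k. c i \<noteq> 0) \<longrightarrow> M (lincomb f c k) > 0)"

definition RS :: "(('a \<Rightarrow> real) \<Rightarrow> real) \<Rightarrow> (('a \<Rightarrow> real) \<Rightarrow> real) \<Rightarrow> nat \<Rightarrow> (nat \<Rightarrow> 'a \<Rightarrow> real) \<Rightarrow> real set" where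
  "RS Q M k f = {Q (lincomb f c k) / M (lincomb f c k) | c. \<exists>i<k. c i \<noteq> 0}"

lemma minmax_level_alt: "minmax_level T Q M k = Inf {Sup (RS Q M k f) | f. adm T M k f}"
  unfolding minmax_level_def RS_def adm_def by simp

definition quad_repr :: "(('a \<Rightarrow> real) \<Rightarrow> real) \<Rightarrow> nat \<Rightarrow> (nat \<Rightarrow> 'a \<Rightarrow> real) \<Rightarrow> bool" where
  "quad_repr Q k f \<longleftrightarrow> (\<exists>q. \<forall>c. Q (lincomb f c k) = qf q k c)"

lemma RS_bdd:
  assumes "adm T M k f" "quad_repr Q k f" "quad_repr M k f"
  shows "bdd_above (RS Q M k f)"
proof -
  obtain q where q: "\<And>c. Q (lincomb f c k) = qf q k c" using assms(2) unfolding quad_repr_def by blast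
  obtain m where m: "\<And>c. M (lincomb f c k) = qf m k c" using assms(3) unfolding quad_repr_def by blast
  have "\<And>c. (\<exists>i<k. c i \<noteq> 0) \<Longrightarrow> qf m k c > 0" using assms(1) m unfolding adm_def by metis
  from rayleigh_bdd[OF this, of q] obtain B where "\<forall>c. (\<exists>i<k. c i \<noteq> 0) \<longrightarrow> qf q k c / qf m k c \<le> B"
    by blast
  then show ?thesis unfolding RS_def bdd_above_def using q m by auto
qed

lemma RS_Sup_ge:
  assumes "adm T M k f" "quad_repr Q k f" "quad_repr M k f"
    and "\<exists>c. (\<exists>i<k. c i \<noteq> 0) \<and> \<mu> * M (lincomb f c k) \<le> Q (lincomb f c k)"
  shows "\<mu> \<le> Sup (RS Q M k f)"
proof -
  obtain c where c: "\<exists>i<k. c i \<noteq> 0" "\<mu> * M (lincomb f c k) \<le> Q (lincomb f c k)" using assms(4) by blast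
  have Mp: "M (lincomb f c k) > 0" using assms(1) c(1) unfolding adm_def by blast
  have "\<mu> \<le> Q (lincomb f c k) / M (lincomb f c k)" using c(2) Mp by (simp add: pos_le_divide_eq)
  also have "\<dots> \<le> Sup (RS Q M k f)"
    by (rule cSup_upper[OF _ RS_bdd[OF assms(1-3)]]) (use c(1) in \<open>auto simp: RS_def\<close>)
  finally show ?thesis .
qed

lemma minmax_lower:
  assumes ne: "\<exists>f. adm T M k f"
    and rep: "\<And>f. adm T M k f \<Longrightarrow> quad_repr Q k f \<and> quad_repr M k f"
    and low: "\<And>f. adm T M k f \<Longrightarrow> \<exists>c. (\<exists>i<k. c i \<noteq> 0) \<and> \<mu> * M (lincomb f c k) \<le> Q (lincomb f c k)"
  shows "\<mu> \<le> minmax_level T Q M k"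
  unfolding minmax_level_alt
proof (rule cInf_greatest)
  show "{Sup (RS Q M k f) |f. adm T M k f} \<noteq> {}" using ne by blast
  fix x assume "x \<in> {Sup (RS Q M k f) |f. adm T M k f}"
  then obtain f where f: "adm T M k f" "x = Sup (RS Q M k f)" by blast
  show "\<mu> \<le> x" unfolding f(2) using f(1) rep[OF f(1)] low[OF f(1)] by (intro RS_Sup_ge) auto
qed

lemma minmax_upper:
  assumes rep: "\<And>f. adm T M k f \<Longrightarrow> quad_repr Q k f \<and> quad_repr M k f"
    and low: "\<And>f. adm T M k f \<Longrightarrow> \<exists>c. (\<exists>i<k. c i \<noteq> 0) \<and> \<mu> * M (lincomb f c k) \<le> Q (lincomb f c k)"
    and f0: "adm T M k f0" and k: "k \<ge> 1"
    and up: "\<And>c. (\<exists>i<k. c i \<noteq> 0) \<Longrightarrow> Q (lincomb f0 c k) \<le> \<nu> * M (lincomb f0 c k)"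
  shows "minmax_level T Q M k \<le> \<nu>"
  unfolding minmax_level_alt
proof -
  have bb: "bdd_below {Sup (RS Q M k f) |f. adm T M k f}"
    unfolding bdd_below_def
  proof (intro exI[of _ \<mu>] ballI)
    fix x assume "x \<in> {Sup (RS Q M k f) |f. adm T M k f}"
    then obtain f where f: "adm T M k f" "x = Sup (RS Q M k f)" by blast
    show "\<mu> \<le> x" unfolding f(2) using f(1) rep[OF f(1)] low[OF f(1)] by (intro RS_Sup_ge) auto
  qed
  have "Inf {Sup (RS Q M k f) |f. adm T M k f} \<le> Sup (RS Q M k f0)"
    by (rule cInf_lower[OF _ bb]) (use f0 in blast)
  also have "Sup (RS Q M k f0) \<le> \<nu>"
  proof (rule cSup_least)
    show "RS Q M k f0 \<noteq> {}" unfolding RS_def using k by (auto intro!: exI[of _ "\<lambda>_. 1"] exI[of _ 0])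
    fix x assume "x \<in> RS Q M k f0"
    then obtain c where c: "\<exists>i<k. c i \<noteq> 0" "x = Q (lincomb f0 c k) / M (lincomb f0 c k)"
      unfolding RS_def by blast
    have Mp: "M (lincomb f0 c k) > 0" using f0 c(1) unfolding adm_def by blast
    show "x \<le> \<nu>" unfolding c(2) using up[OF c(1)] Mp by (simp add: pos_divide_le_eq)
  qed
  finally show "Inf {Sup (RS Q M k f) |f. adm T M k f} \<le> \<nu>" .
qed


lemma theta_ex:
  assumes "\<alpha> > 0" "l > 0"
  shows "\<exists>\<theta>. 0 < \<theta> \<and> \<theta> < pi/2 \<and> 2 * \<theta> * tan \<theta> = \<alpha> * l"
proof -
  define b where "b = arctan (1 + \<alpha> * l)"
  have al: "\<alpha> * l > 0" using assms by simp
  have b1: "b < pi/2" unfolding b_def by (rule arctan_ubound)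
  have b2: "pi/4 \<le> b" unfolding b_def using al arctan_le_iff[of 1 "1 + \<alpha> * l"] arctan_one by simp
  have tb: "tan b = 1 + \<alpha> * l" unfolding b_def by (rule tan_arctan)
  have "2 * b * tan b \<ge> 2 * (pi/4) * (1 + \<alpha> * l)"
    unfolding tb using b2 al by (intro mult_right_mono) auto
  moreover have "2 * (pi/4) * (1 + \<alpha> * l) \<ge> 1 * (1 + \<alpha> * l)"
    using pi_gt3 al by (intro mult_right_mono) auto
  ultimately have up: "\<alpha> * l \<le> 2 * b * tan b" by simp
  have cont: "continuous_on {0..b} (\<lambda>t. 2 * t * tan t)"
  proof -
    have "\<forall>t\<in>{0..b}. cos t \<noteq> 0"
    proof
      fix t assume "t \<in> {0..b}"
      then have "0 < cos t" using b1 pi_gt3 by (intro cos_gt_zero_pi) auto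
      then show "cos t \<noteq> 0" by simp
    qed
    then show ?thesis by (intro continuous_intros continuous_on_tan) auto
  qed
  obtain t where t: "0 \<le> t" "t \<le> b" "2 * t * tan t = \<alpha> * l"
    using IVT'[of "\<lambda>t. 2 * t * tan t" 0 "\<alpha> * l" b, OF _ up _ cont] al b2 pi_gt3 by auto
  have "t \<noteq> 0" using t(3) al by auto
  then show ?thesis using t b1 by (intro exI[of _ t]) auto
qed

definition th :: "real \<Rightarrow> real \<Rightarrow> real" where
  "th \<alpha> l = (SOME \<theta>. 0 < \<theta> \<and> \<theta> < pi/2 \<and> 2 * \<theta> * tan \<theta> = \<alpha> * l)"

definition mu :: "real \<Rightarrow> real \<Rightarrow> real" where
  "mu \<alpha> l = (2 * th \<alpha> l / l)\<^sup>2"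

lemma th_props:
  assumes "\<alpha> > 0" "l > 0"
  shows "0 < th \<alpha> l" "th \<alpha> l < pi/2" "2 * th \<alpha> l * tan (th \<alpha> l) = \<alpha> * l"
  using someI_ex[OF theta_ex[OF assms]] unfolding th_def by auto

lemma mu_alt:
  assumes "\<alpha> > 0" "l > 0"
  shows "mu \<alpha> l = (\<alpha> / tan (th \<alpha> l))\<^sup>2"
proof -
  define t where "t = th \<alpha> l"
  have T: "tan t > 0" using th_props[OF assms] unfolding t_def by (intro tan_gt_zero) auto
  have eq: "2 * t * tan t = \<alpha> * l" using th_props(3)[OF assms] unfolding t_def .
  have "\<alpha> = 2 * t * tan t / l" using eq assms(2) by (simp add: eq_divide_eq)
  then have "\<alpha> / tan t = 2 * t / l" using T by simp
  then show ?thesis unfolding mu_def t_def by simp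
qed

lemma integrable_rmult: "f integrable_on S \<Longrightarrow> (\<lambda>x. c * f x :: real) integrable_on S"
  using integrable_cmul[of f S c] by simp

lemma cont_of_deriv:
  assumes "\<And>x. x \<in> S \<Longrightarrow> (w has_real_derivative w' x) (at x)"
  shows "continuous_on S w"
  using assms by (intro continuous_at_imp_continuous_on ballI DERIV_isCont) blast

lemma poincare:
  assumes "\<alpha> > 0" "a < b"
    and w: "\<And>x. x \<in> {a..b} \<Longrightarrow> (w has_real_derivative w' x) (at x)"
    and cw': "continuous_on {a..b} w'"
  shows "mu \<alpha> (b - a) * integral {a..b} (\<lambda>x. (w x)\<^sup>2)
          \<le> integral {a..b} (\<lambda>x. (w' x)\<^sup>2) + \<alpha> * ((w a)\<^sup>2 + (w b)\<^sup>2)"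
proof -
  define l where "l = b - a"
  define t where "t = th \<alpha> l"
  define \<omega> where "\<omega> = 2 * t / l"
  define cc where "cc = (a + b) / 2"
  define u where "u x = \<omega> * (x - cc)" for x
  have l: "l > 0" unfolding l_def using assms by simp
  note tp = th_props[OF assms(1) l, folded t_def]
  have \<omega>pos: "\<omega> > 0" unfolding \<omega>_def using tp l by simp
  have \<alpha>eq: "\<omega> * tan t = \<alpha>"
  proof -
    have "\<omega> * tan t = 2 * t * tan t / l" unfolding \<omega>_def by simp
    also have "\<dots> = \<alpha>" using tp(3) l by simp
    finally show ?thesis .
  qed
  have \<omega>l: "\<omega> * (l / 2) = t" unfolding \<omega>_def using l by simp
  have ub: "- t \<le> u x \<and> u x \<le> t" if "x \<in> {a..b}" for x
  proof -
    have "x - cc \<le> l / 2" "- (l/2) \<le> x - cc" using that unfolding cc_def l_def by (auto simp: field_simps)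
    then have "\<omega> * (x - cc) \<le> \<omega> * (l / 2)" "\<omega> * (- (l/2)) \<le> \<omega> * (x - cc)"
      using \<omega>pos by (intro mult_left_mono; simp)+
    then show ?thesis unfolding u_def using \<omega>l by simp
  qed
  have cpos: "cos (u x) > 0" if "x \<in> {a..b}" for x
    using ub[OF that] tp by (intro cos_gt_zero_pi) auto
  define \<psi> where "\<psi> x = - \<omega> * tan (u x)" for x
  define F where "F x = w x * w x * \<psi> x" for x
  define F' where "F' x = (w' x * w x + w' x * w x) * \<psi> x + (- \<omega> * (inverse ((cos (u x))\<^sup>2) * \<omega>)) * (w x * w x)" for x
  have dF: "(F has_real_derivative F' x) (at x)" if x: "x \<in> {a..b}" for x
  proof -
    have du: "(u has_real_derivative \<omega>) (at x)" unfolding u_def by (auto intro!: derivative_eq_intros)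
    have "((\<lambda>x. tan (u x)) has_real_derivative inverse ((cos (u x))\<^sup>2) * \<omega>) (at x)"
      using DERIV_chain2[OF DERIV_tan du] cpos[OF x] by simp
    then have dpsi: "(\<psi> has_real_derivative - \<omega> * (inverse ((cos (u x))\<^sup>2) * \<omega>)) (at x)"
      unfolding \<psi>_def by (rule DERIV_cmult)
    have dww: "((\<lambda>x. w x * w x) has_real_derivative w' x * w x + w' x * w x) (at x)"
      using DERIV_mult[OF w[OF x] w[OF x]] .
    show ?thesis unfolding F_def F'_def using DERIV_mult[OF dww dpsi] .
  qed
  have pt: "F' x + \<omega>\<^sup>2 * (w x)\<^sup>2 \<le> (w' x)\<^sup>2" if x: "x \<in> {a..b}" for x
  proof -
    define T where "T = tan (u x)"
    have inv: "inverse ((cos (u x))\<^sup>2) = 1 + T\<^sup>2"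
      using tan_sec[of "u x"] cpos[OF x] unfolding T_def by (simp add: power_inverse)
    have "0 \<le> (w' x + \<omega> * T * w x)\<^sup>2" by simp
    then show ?thesis unfolding F'_def inv \<psi>_def T_def[symmetric]
      by (simp add: power2_eq_square algebra_simps)
  qed
  have cw: "continuous_on {a..b} w" using w by (rule cont_of_deriv)
  have ftc: "(F' has_integral F b - F a) {a..b}"
    using assms(2) dF
    by (intro fundamental_theorem_of_calculus)
       (auto simp: has_real_derivative_iff_has_vector_derivative[symmetric] intro: has_field_derivative_at_within)
  have iw: "(\<lambda>x. (w x)\<^sup>2) integrable_on {a..b}"
    by (intro integrable_continuous_interval continuous_intros cw)
  have iw': "(\<lambda>x. (w' x)\<^sup>2) integrable_on {a..b}"
    by (intro integrable_continuous_interval continuous_intros cw')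
  have iF: "F' integrable_on {a..b}" using ftc by blast
  have "integral {a..b} (\<lambda>x. F' x + \<omega>\<^sup>2 * (w x)\<^sup>2) = (F b - F a) + \<omega>\<^sup>2 * integral {a..b} (\<lambda>x. (w x)\<^sup>2)"
    using integral_add[OF iF integrable_rmult[OF iw, of "\<omega>\<^sup>2"]] integral_unique[OF ftc] by simp
  moreover have "integral {a..b} (\<lambda>x. F' x + \<omega>\<^sup>2 * (w x)\<^sup>2) \<le> integral {a..b} (\<lambda>x. (w' x)\<^sup>2)"
    by (intro integral_le integrable_add iF integrable_rmult iw iw') (use pt in auto)
  moreover have "F b = - \<alpha> * (w b)\<^sup>2"
  proof -
    have "u b = t" unfolding u_def cc_def using \<omega>l unfolding l_def by (simp add: field_simps)
    then show ?thesis unfolding F_def \<psi>_def using \<alpha>eq by (simp add: power2_eq_square)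
  qed
  moreover have "F a = \<alpha> * (w a)\<^sup>2"
  proof -
    have "u a = - t" unfolding u_def cc_def using \<omega>l unfolding l_def by (simp add: field_simps)
    then show ?thesis unfolding F_def \<psi>_def using \<alpha>eq by (simp add: power2_eq_square)
  qed
  moreover have "mu \<alpha> (b - a) = \<omega>\<^sup>2" unfolding mu_def \<omega>_def t_def l_def ..
  ultimately show ?thesis by (simp add: algebra_simps)
qed

lemma integral_pos_cont:
  fixes f :: "real \<Rightarrow> real"
  assumes "continuous_on {a..b} f" "a < b" "\<And>x. x \<in> {a..b} \<Longrightarrow> f x \<ge> 0"
    and "z \<in> {a..b}" "f z > 0"
  shows "integral {a..b} f > 0"
proof -
  have int: "f integrable_on {a..b}" using assms(1) by (rule integrable_continuous_interval)
  have ge: "integral {a..b} f \<ge> 0" using assms(3) by (intro integral_nonneg int) auto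
  have "integral {a..b} f \<noteq> 0"
  proof
    assume z: "integral {a..b} f = 0"
    have "(f has_integral 0) (cbox a b)" using int z by (metis box_real(2) integrable_integral)
    then have "f z = 0"
      using assms by (intro has_integral_0_cbox_imp_0[of a b f]) auto
    then show False using assms(5) by simp
  qed
  then show ?thesis using ge by simp
qed

definition om :: "real \<Rightarrow> real \<Rightarrow> real" where
  "om \<alpha> s = 2 * th \<alpha> s / s"

definition phi :: "real \<Rightarrow> real \<Rightarrow> real \<Rightarrow> real \<Rightarrow> real" where
  "phi \<alpha> s p x = cos (om \<alpha> s * (x - p - s / 2))"

definition dphi :: "real \<Rightarrow> real \<Rightarrow> real \<Rightarrow> real \<Rightarrow> real" where
  "dphi \<alpha> s p x = - om \<alpha> s * sin (om \<alpha> s * (x - p - s / 2))"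

lemma phi_deriv: "(phi \<alpha> s p has_real_derivative dphi \<alpha> s p x) (at x)"
  unfolding phi_def dphi_def by (auto intro!: derivative_eq_intros)

lemma dphi_deriv: "(dphi \<alpha> s p has_real_derivative - ((om \<alpha> s)\<^sup>2) * phi \<alpha> s p x) (at x)"
  unfolding phi_def dphi_def by (auto intro!: derivative_eq_intros simp: power2_eq_square)

lemma phi_cont: "continuous_on S (phi \<alpha> s p)"
  unfolding phi_def by (intro continuous_intros)

lemma dphi_cont: "continuous_on S (dphi \<alpha> s p)"
  unfolding dphi_def by (intro continuous_intros)

lemma phi_sym: "phi \<alpha> s p (p + s - x) = phi \<alpha> s p (p + x)"
proof -
  have "om \<alpha> s * (p + s - x - p - s / 2) = - (om \<alpha> s * (p + x - p - s / 2))"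
    by (simp add: algebra_simps)
  then show ?thesis unfolding phi_def by (metis cos_minus)
qed

lemma dphi_sym: "dphi \<alpha> s p (p + s - x) = - dphi \<alpha> s p (p + x)"
proof -
  have "om \<alpha> s * (p + s - x - p - s / 2) = - (om \<alpha> s * (p + x - p - s / 2))"
    by (simp add: algebra_simps)
  then show ?thesis unfolding dphi_def by (metis sin_minus mult_minus_right minus_minus)
qed

lemma phi_end_vals:
  assumes "s > 0"
  shows "phi \<alpha> s p p = cos (th \<alpha> s)" "phi \<alpha> s p (p + s) = cos (th \<alpha> s)"
    "dphi \<alpha> s p p = om \<alpha> s * sin (th \<alpha> s)"
    "dphi \<alpha> s p (p + s) = - om \<alpha> s * sin (th \<alpha> s)"
    "phi \<alpha> s p (p + s/2) = 1"
proof -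
  have e1: "om \<alpha> s * (p - p - s / 2) = - th \<alpha> s" using assms by (simp add: om_def field_simps)
  have e2: "om \<alpha> s * (p + s - p - s / 2) = th \<alpha> s" using assms by (simp add: om_def field_simps)
  show "phi \<alpha> s p p = cos (th \<alpha> s)" unfolding phi_def e1 by simp
  show "phi \<alpha> s p (p + s) = cos (th \<alpha> s)" unfolding phi_def e2 by simp
  show "dphi \<alpha> s p p = om \<alpha> s * sin (th \<alpha> s)" unfolding dphi_def e1 by simp
  show "dphi \<alpha> s p (p + s) = - om \<alpha> s * sin (th \<alpha> s)" unfolding dphi_def e2 by simp
  show "phi \<alpha> s p (p + s/2) = 1" unfolding phi_def by simp
qed

lemma phi_mass_pos:
  assumes "s > 0"
  shows "integral {p..p+s} (\<lambda>x. (phi \<alpha> s p x)\<^sup>2) > 0"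
  by (rule integral_pos_cont[where z = "p + s/2"])
     (use assms phi_end_vals(5)[OF assms] in \<open>auto intro!: continuous_intros phi_cont\<close>)

lemma eigen_id:
  assumes "\<alpha> > 0" "s > 0"
  shows "integral {p..p+s} (\<lambda>x. (dphi \<alpha> s p x)\<^sup>2) + \<alpha> * ((phi \<alpha> s p p)\<^sup>2 + (phi \<alpha> s p (p+s))\<^sup>2)
       = mu \<alpha> s * integral {p..p+s} (\<lambda>x. (phi \<alpha> s p x)\<^sup>2)"
proof -
  define t where "t = th \<alpha> s"
  define \<omega> where "\<omega> = om \<alpha> s"
  note tp = th_props[OF assms, folded t_def]
  have ct: "cos t > 0" using tp by (intro cos_gt_zero_pi) auto
  have \<alpha>eq: "\<alpha> = \<omega> * sin t / cos t"
  proof -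
    have "\<omega> * tan t = 2 * t * tan t / s" unfolding \<omega>_def om_def t_def by simp
    also have "\<dots> = \<alpha>" using tp(3) assms by simp
    finally show ?thesis by (simp add: tan_def)
  qed
  define G where "G x = phi \<alpha> s p x * dphi \<alpha> s p x" for x
  define G' where "G' x = dphi \<alpha> s p x * dphi \<alpha> s p x + - ((om \<alpha> s)\<^sup>2) * phi \<alpha> s p x * phi \<alpha> s p x" for x
  have dG: "(G has_real_derivative G' x) (at x)" for x
    unfolding G_def G'_def using DERIV_mult[OF phi_deriv dphi_deriv] by simp
  have ftc: "(G' has_integral G (p+s) - G p) {p..p+s}"
    using assms(2) dG
    by (intro fundamental_theorem_of_calculus)
       (auto simp: has_real_derivative_iff_has_vector_derivative[symmetric] intro: has_field_derivative_at_within)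
  have i1: "(\<lambda>x. (dphi \<alpha> s p x)\<^sup>2) integrable_on {p..p+s}"
    by (intro integrable_continuous_interval continuous_intros dphi_cont)
  have i2: "(\<lambda>x. (phi \<alpha> s p x)\<^sup>2) integrable_on {p..p+s}"
    by (intro integrable_continuous_interval continuous_intros phi_cont)
  have "integral {p..p+s} G' = integral {p..p+s} (\<lambda>x. (dphi \<alpha> s p x)\<^sup>2) - \<omega>\<^sup>2 * integral {p..p+s} (\<lambda>x. (phi \<alpha> s p x)\<^sup>2)"
  proof -
    have "G' = (\<lambda>x. (dphi \<alpha> s p x)\<^sup>2 - \<omega>\<^sup>2 * (phi \<alpha> s p x)\<^sup>2)"
      unfolding G'_def \<omega>_def by (auto simp: power2_eq_square)
    then show ?thesis using integral_diff[OF i1 integrable_rmult[OF i2, of "\<omega>\<^sup>2"]] by simp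
  qed
  moreover have "G (p+s) - G p = - 2 * \<omega> * sin t * cos t"
    unfolding G_def using phi_end_vals[OF assms(2), where \<alpha>=\<alpha> and p=p] unfolding \<omega>_def t_def by simp
  moreover have "\<alpha> * ((phi \<alpha> s p p)\<^sup>2 + (phi \<alpha> s p (p+s))\<^sup>2) = 2 * \<omega> * sin t * cos t"
  proof -
    have "\<alpha> * ((phi \<alpha> s p p)\<^sup>2 + (phi \<alpha> s p (p+s))\<^sup>2) = \<alpha> * (2 * (cos t)\<^sup>2)"
      using phi_end_vals[OF assms(2), where \<alpha>=\<alpha> and p=p] unfolding t_def by simp
    also have "\<dots> = 2 * \<omega> * sin t * cos t" unfolding \<alpha>eq using ct
      by (simp add: power2_eq_square field_simps)
    finally show ?thesis .
  qed
  moreover have "mu \<alpha> s = \<omega>\<^sup>2" unfolding mu_def \<omega>_def t_def om_def ..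
  ultimately show ?thesis using integral_unique[OF ftc] by simp
qed


definition Cf :: "real \<Rightarrow> real" where "Cf z = (cos z / sin z)\<^sup>2"
definition Sf :: "real \<Rightarrow> real" where "Sf z = ln z + ln (sin z) - ln (cos z)"
definition Pinv :: "real \<Rightarrow> real" where "Pinv z = (sin z / cos z)\<^sup>2 + (sin z)\<^sup>2 * (tan z / z)"

lemma trig_pos:
  assumes "0 < z" "z < pi/2"
  shows "sin z > 0" "cos z > 0" "tan z > 0"
  using assms sin_gt_zero[of z] cos_gt_zero_pi[of z] tan_gt_zero[of z] pi_gt3 by auto

lemma Cf_deriv:
  assumes "0 < z" "z < pi/2"
  shows "(Cf has_real_derivative - 2 * cos z / (sin z)^3) (at z)"
proof -
  note tp = trig_pos[OF assms]
  define s c where "s = sin z" "c = cos z"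
  have raw: "(Cf has_real_derivative (- (2 * (c * s) * (s * s)) - c * c * (2 * (c * s))) / (s * s * (s * s))) (at z)"
    unfolding Cf_def s_c_def using tp
    by (auto intro!: derivative_eq_intros simp: power2_eq_square)
  have id: "s * s + c * c = 1" unfolding s_c_def by (metis sin_cos_squared_add power2_eq_square)
  have "- (2 * (c * s) * (s * s)) - c * c * (2 * (c * s)) = -2 * c * s * (s * s + c * c)"
    by (simp add: algebra_simps)
  also have "\<dots> = -2 * c * s" using id by simp
  finally have "(- (2 * (c * s) * (s * s)) - c * c * (2 * (c * s))) / (s * s * (s * s)) = - 2 * c / s^3"
    using tp unfolding s_c_def[symmetric] by (simp add: power3_eq_cube)
  with raw show ?thesis unfolding s_c_def by simp
qed

lemma Sf_deriv:
  assumes "0 < z" "z < pi/2"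
  shows "(Sf has_real_derivative 1 / z + cos z / sin z + sin z / cos z) (at z)"
proof -
  note tp = trig_pos[OF assms]
  show ?thesis unfolding Sf_def using tp assms
    by (auto intro!: derivative_eq_intros simp: field_simps)
qed

lemma tan_over_mono:
  assumes "0 < a" "a \<le> b" "b < pi/2"
  shows "tan a / a \<le> tan b / b"
proof (rule DERIV_nonneg_imp_increasing_open[OF assms(2)])
  fix x assume x: "a < x" "x < b"
  then have x0: "0 < x" "x < pi/2" using assms by auto
  note tp = trig_pos[OF x0]
  have d: "((\<lambda>x. tan x / x) has_real_derivative (inverse ((cos x)\<^sup>2) * x - tan x) / x\<^sup>2) (at x)"
    using tp x0 by (auto intro!: derivative_eq_intros simp: power2_eq_square)
  have "sin x * cos x \<le> x"
  proof -
    have "sin x * cos x \<le> sin x * 1" using tp by (intro mult_left_mono) auto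
    also have "\<dots> \<le> x" using sin_x_le_x[of x] x0 by simp
    finally show ?thesis .
  qed
  then have "tan x \<le> inverse ((cos x)\<^sup>2) * x"
    using tp by (simp add: tan_def field_simps power2_eq_square)
  then have "(inverse ((cos x)\<^sup>2) * x - tan x) / x\<^sup>2 \<ge> 0" by simp
  with d show "\<exists>y. ((\<lambda>x. tan x / x) has_real_derivative y) (at x) \<and> 0 \<le> y" by blast
next
  have "\<forall>x\<in>{a..b}. cos x \<noteq> 0 \<and> x \<noteq> 0"
    using assms trig_pos by (metis atLeastAtMost_iff less_le_trans not_less order.strict_iff_not)
  then show "continuous_on {a..b} (\<lambda>x. tan x / x)"
    by (intro continuous_intros continuous_on_tan) auto
qed

lemma Pinv_mono:
  assumes "0 < a" "a \<le> b" "b < pi/2"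
  shows "Pinv a \<le> Pinv b"
proof -
  have a2: "a < pi/2" using assms by simp
  note ta = trig_pos[OF assms(1) a2] and tb = trig_pos[of b] 
  have b0: "0 < b" using assms by simp
  have tan_le: "tan a \<le> tan b" using assms pi_gt3 by (intro tan_mono_le) auto
  have sin_le: "sin a \<le> sin b" using assms pi_gt3 by (intro sin_monotone_2pi_le) auto
  have "(tan a)\<^sup>2 \<le> (tan b)\<^sup>2" using tan_le ta by (intro power_mono) auto
  then have "(sin a / cos a)\<^sup>2 \<le> (sin b / cos b)\<^sup>2" by (simp add: tan_def)
  moreover have "(sin a)\<^sup>2 * (tan a / a) \<le> (sin b)\<^sup>2 * (tan b / b)"
    using sin_le ta tan_over_mono[OF assms] assms
    by (intro mult_mono power_mono) (auto intro: divide_nonneg_pos)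
  ultimately show ?thesis unfolding Pinv_def by simp
qed

lemma Pinv_pos:
  assumes "0 < z" "z < pi/2"
  shows "Pinv z > 0"
  using trig_pos[OF assms] assms unfolding Pinv_def by (intro add_pos_nonneg) auto

lemma ratio_id:
  assumes "0 < z" "z < pi/2"
  shows "(- 2 * cos z / (sin z)^3) / (1 / z + cos z / sin z + sin z / cos z) = - 2 / Pinv z"
proof -
  note tp = trig_pos[OF assms]
  define s c where "s = sin z" "c = cos z"
  have id: "s * s + c * c = 1" unfolding s_c_def by (metis sin_cos_squared_add power2_eq_square)
  have s0: "s > 0" "c > 0" using tp unfolding s_c_def by auto
  have den: "1 / z + c / s + s / c = (s * c + z) / (z * s * c)"
  proof -
    have "1 / z + c / s + s / c = (s * c + z * (s * s + c * c)) / (z * s * c)"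
      using s0 assms by (simp add: field_simps)
    then show ?thesis using id by simp
  qed
  have P: "Pinv z = s * s * (z + s * c) / (c * c * z)"
    unfolding Pinv_def tan_def s_c_def[symmetric] using s0 assms
    by (simp add: field_simps power2_eq_square)
  show ?thesis unfolding s_c_def[symmetric] den P using s0 assms
    by (simp add: field_simps power3_eq_cube)
qed

lemma Sf_strict:
  assumes "0 < a" "a < b" "b < pi/2"
  shows "Sf a < Sf b"
proof (rule DERIV_pos_imp_increasing[OF assms(2)])
  fix x assume x: "a \<le> x" "x \<le> b"
  then have x0: "0 < x" "x < pi/2" using assms by auto
  note tp = trig_pos[OF x0]
  have "1 / x + cos x / sin x + sin x / cos x > 0" using tp x0 by (intro add_pos_pos) auto
  then show "\<exists>y. (Sf has_real_derivative y) (at x) \<and> 0 < y" using Sf_deriv[OF x0] by blast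
qed

lemma Sf_mono_rev:
  assumes "0 < a" "a < pi/2" "0 < b" "b < pi/2" "Sf a \<le> Sf b"
  shows "a \<le> b"
  using Sf_strict[of b a] assms by force

lemma div_helper: "(X::real) * D = Y * N \<Longrightarrow> D \<noteq> 0 \<Longrightarrow> X = Y * (N / D)"
  by (simp add: field_simps)

lemma GMVT_step:
  assumes "0 < a" "a < b" "b < pi/2"
  shows "\<exists>\<xi>. a < \<xi> \<and> \<xi> < b \<and> Cf b - Cf a = (Sf b - Sf a) * (- 2 / Pinv \<xi>)"
proof -
  have cont: "isCont Cf z" "isCont Sf z" if "a \<le> z" "z \<le> b" for z
  proof -
    have z0: "0 < z" "z < pi/2" using that assms by auto
    show "isCont Cf z" using Cf_deriv[OF z0] by (rule DERIV_isCont)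
    show "isCont Sf z" using Sf_deriv[OF z0] by (rule DERIV_isCont)
  qed
  obtain \<xi> where \<xi>: "a < \<xi>" "\<xi> < b"
    "(Cf b - Cf a) * (1 / \<xi> + cos \<xi> / sin \<xi> + sin \<xi> / cos \<xi>) = (Sf b - Sf a) * (- 2 * cos \<xi> / (sin \<xi>)^3)"
    using GMVT'[of a b Cf Sf "\<lambda>z. 1 / z + cos z / sin z + sin z / cos z" "\<lambda>z. - 2 * cos z / (sin z)^3"]
      assms cont Cf_deriv Sf_deriv by fastforce
  have x0: "0 < \<xi>" "\<xi> < pi/2" using \<xi> assms by auto
  note tp = trig_pos[OF x0]
  have Dpos: "1 / \<xi> + cos \<xi> / sin \<xi> + sin \<xi> / cos \<xi> > 0" using tp x0 by (intro add_pos_pos) auto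
  have "Cf b - Cf a = (Sf b - Sf a) * ((- 2 * cos \<xi> / (sin \<xi>)^3) / (1 / \<xi> + cos \<xi> / sin \<xi> + sin \<xi> / cos \<xi>))"
    using div_helper[OF \<xi>(3)] Dpos by simp
  then have "Cf b - Cf a = (Sf b - Sf a) * (- 2 / Pinv \<xi>)" unfolding ratio_id[OF x0] .
  then show ?thesis using \<xi> by blast
qed

lemma conv3:
  assumes "0 < t1" "t1 \<le> t3" "t3 \<le> t2" "t2 < pi/2" "Sf t3 - Sf t1 = Sf t2 - Sf t3"
  shows "2 * Cf t3 \<le> Cf t1 + Cf t2"
proof (cases "t1 = t3 \<or> t3 = t2")
  case True
  then have "t1 = t3 \<and> t3 = t2"
  proof
    assume e: "t1 = t3"
    then have "Sf t2 = Sf t3" using assms(5) by simp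
    then have "t2 = t3" using Sf_strict[of t3 t2] assms e by force
    then show ?thesis using e by simp
  next
    assume e: "t3 = t2"
    then have "Sf t1 = Sf t3" using assms(5) by simp
    then have "t1 = t3" using Sf_strict[of t1 t3] assms e by force
    then show ?thesis using e by simp
  qed
  then show ?thesis by simp
next
  case False
  then have lt: "t1 < t3" "t3 < t2" using assms by auto
  obtain x1 where x1: "t1 < x1" "x1 < t3" "Cf t3 - Cf t1 = (Sf t3 - Sf t1) * (- 2 / Pinv x1)"
    using GMVT_step[of t1 t3] lt assms by auto
  obtain x2 where x2: "t3 < x2" "x2 < t2" "Cf t2 - Cf t3 = (Sf t2 - Sf t3) * (- 2 / Pinv x2)"
    using GMVT_step[of t3 t2] lt assms by auto
  have d0: "Sf t3 - Sf t1 \<ge> 0" using Sf_strict[of t1 t3] lt assms by simp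
  have p1: "Pinv x1 > 0" using Pinv_pos[of x1] x1 assms lt by auto
  have "Pinv x1 \<le> Pinv x2" using Pinv_mono[of x1 x2] x1 x2 assms lt by auto
  then have "- 2 / Pinv x1 \<le> - 2 / Pinv x2" using p1 by (simp add: divide_le_eq_1 frac_le)
  then have "(Sf t3 - Sf t1) * (- 2 / Pinv x1) \<le> (Sf t3 - Sf t1) * (- 2 / Pinv x2)"
    using d0 by (rule mult_left_mono)
  then have "(Sf t3 - Sf t1) * (- 2 / Pinv x1) \<le> (Sf t2 - Sf t3) * (- 2 / Pinv x2)"
    unfolding assms(5) .
  then show ?thesis using x1(3) x2(3) by linarith
qed

lemma Sf_th:
  assumes "\<alpha> > 0" "l > 0"
  shows "Sf (th \<alpha> l) = ln (\<alpha> * l / 2)"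
proof -
  define t where "t = th \<alpha> l"
  note tp = th_props[OF assms, folded t_def]
  note tr = trig_pos[OF tp(1,2)]
  have e: "t * tan t = \<alpha> * l / 2" using tp(3) by simp
  have "ln (t * tan t) = ln t + ln (sin t) - ln (cos t)"
    using tp tr by (simp add: tan_def ln_mult ln_div)
  then have "Sf t = ln (t * tan t)" unfolding Sf_def by simp
  also have "\<dots> = ln (\<alpha> * l / 2)" unfolding e ..
  finally show ?thesis unfolding t_def .
qed

lemma mu_Cf:
  assumes "\<alpha> > 0" "l > 0"
  shows "mu \<alpha> l = \<alpha>\<^sup>2 * Cf (th \<alpha> l)"
proof -
  define t where "t = th \<alpha> l"
  note tp = th_props[OF assms, folded t_def]
  note tr = trig_pos[OF tp(1,2)]
  have "\<alpha> / tan t = \<alpha> * (cos t / sin t)" using tr by (simp add: tan_def)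
  then show ?thesis unfolding mu_alt[OF assms] Cf_def t_def[symmetric] by (simp only: power_mult_distrib)
qed

lemma mu_convex_aux:
  assumes "\<alpha> > 0" "x > 0" "y > 0" "x \<le> y"
  shows "2 * mu \<alpha> (sqrt (x * y)) \<le> mu \<alpha> x + mu \<alpha> y"
proof -
  define z where "z = sqrt (x * y)"
  have z0: "z > 0" unfolding z_def using assms by simp
  have zz: "z * z = x * y" unfolding z_def using assms by simp
  have xz: "x \<le> z"
  proof -
    have "sqrt (x * x) \<le> sqrt (x * y)" using assms by (intro real_sqrt_le_mono mult_left_mono) auto
    then show ?thesis unfolding z_def using assms by simp
  qed
  have zy: "z \<le> y"
  proof -
    have "sqrt (x * y) \<le> sqrt (y * y)" using assms by (intro real_sqrt_le_mono mult_right_mono) auto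
    then show ?thesis unfolding z_def using assms by simp
  qed
  define t1 t2 t3 where "t1 = th \<alpha> x" "t2 = th \<alpha> y" "t3 = th \<alpha> z"
  note p1 = th_props[OF assms(1,2), folded t1_t2_t3_def(1)]
  note p2 = th_props[OF assms(1,3), folded t1_t2_t3_def(2)]
  note p3 = th_props[OF assms(1) z0, folded t1_t2_t3_def(3)]
  have S1: "Sf t1 = ln (\<alpha> * x / 2)" unfolding t1_t2_t3_def by (rule Sf_th[OF assms(1,2)])
  have S2: "Sf t2 = ln (\<alpha> * y / 2)" unfolding t1_t2_t3_def by (rule Sf_th[OF assms(1,3)])
  have S3: "Sf t3 = ln (\<alpha> * z / 2)" unfolding t1_t2_t3_def by (rule Sf_th[OF assms(1) z0])
  have "2 * ln (\<alpha> * z / 2) = ln (\<alpha> * x / 2) + ln (\<alpha> * y / 2)"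
  proof -
    have "(\<alpha> * z / 2) * (\<alpha> * z / 2) = (\<alpha> * x / 2) * (\<alpha> * y / 2)" using zz by (simp add: algebra_simps)
    then have "ln ((\<alpha> * z / 2) * (\<alpha> * z / 2)) = ln ((\<alpha> * x / 2) * (\<alpha> * y / 2))" by (rule arg_cong)
    moreover have "ln ((\<alpha> * z / 2) * (\<alpha> * z / 2)) = ln (\<alpha> * z / 2) + ln (\<alpha> * z / 2)"
      by (subst ln_mult) (use assms z0 in auto)
    moreover have "ln ((\<alpha> * x / 2) * (\<alpha> * y / 2)) = ln (\<alpha> * x / 2) + ln (\<alpha> * y / 2)"
      by (subst ln_mult) (use assms in auto)
    ultimately show ?thesis by simp
  qed
  then have eqd: "Sf t3 - Sf t1 = Sf t2 - Sf t3" unfolding S1 S2 S3 by simp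
  have "Sf t1 \<le> Sf t3" unfolding S1 S3 using assms z0 xz by simp
  then have t13: "t1 \<le> t3" using Sf_mono_rev p1 p3 by blast
  have "Sf t3 \<le> Sf t2" unfolding S2 S3 using assms z0 zy by simp
  then have t32: "t3 \<le> t2" using Sf_mono_rev p2 p3 by blast
  have "2 * Cf t3 \<le> Cf t1 + Cf t2" by (rule conv3) (use p1 p2 t13 t32 eqd in auto)
  then have "\<alpha>\<^sup>2 * (2 * Cf t3) \<le> \<alpha>\<^sup>2 * (Cf t1 + Cf t2)" by (rule mult_left_mono) simp
  then show ?thesis
    unfolding z_def[symmetric] mu_Cf[OF assms(1,2)] mu_Cf[OF assms(1,3)] mu_Cf[OF assms(1) z0]
      t1_t2_t3_def[symmetric] by (simp add: algebra_simps)
qed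

lemma mu_convex:
  assumes "\<alpha> > 0" "x > 0" "y > 0"
  shows "2 * mu \<alpha> (sqrt (x * y)) \<le> mu \<alpha> x + mu \<alpha> y"
proof (cases "x \<le> y")
  case True
  then show ?thesis using mu_convex_aux assms by blast
next
  case False
  then show ?thesis using mu_convex_aux[of \<alpha> y x] assms by (simp add: mult.commute add.commute)
qed


lemma int_quad:
  fixes g :: "nat \<Rightarrow> 'a::euclidean_space \<Rightarrow> real"
  assumes "\<And>i. i < n \<Longrightarrow> continuous_on (cbox a b) (g i)"
  shows "integral (cbox a b) (\<lambda>x. (\<Sum>i<n. c i * g i x)\<^sup>2) = qf (\<lambda>i j. integral (cbox a b) (\<lambda>x. g i x * g j x)) n c"
proof -
  have pt: "(\<Sum>i<n. c i * g i x)\<^sup>2 = (\<Sum>i<n. \<Sum>j<n. c i * c j * (g i x * g j x))" for x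
    using point_quad[of c "\<lambda>i. g i x" n] unfolding qf_def .
  have ii: "(\<lambda>x. c i * c j * (g i x * g j x)) integrable_on cbox a b" if "i < n" "j < n" for i j
    by (intro integrable_continuous continuous_intros assms that)
  have "integral (cbox a b) (\<lambda>x. (\<Sum>i<n. c i * g i x)\<^sup>2)
      = integral (cbox a b) (\<lambda>x. \<Sum>i<n. \<Sum>j<n. c i * c j * (g i x * g j x))"
    unfolding pt ..
  also have "\<dots> = (\<Sum>i<n. integral (cbox a b) (\<lambda>x. \<Sum>j<n. c i * c j * (g i x * g j x)))"
    by (rule Henstock_Kurzweil_Integration.integral_sum) (auto intro!: integrable_sum ii)
  also have "\<dots> = (\<Sum>i<n. \<Sum>j<n. integral (cbox a b) (\<lambda>x. c i * c j * (g i x * g j x)))"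
    by (intro sum.cong refl Henstock_Kurzweil_Integration.integral_sum) (auto intro!: ii)
  also have "\<dots> = qf (\<lambda>i j. integral (cbox a b) (\<lambda>x. g i x * g j x)) n c"
    unfolding qf_def by simp
  finally show ?thesis .
qed

lemma int_quad_real:
  fixes g :: "nat \<Rightarrow> real \<Rightarrow> real"
  assumes "\<And>i. i < n \<Longrightarrow> continuous_on {a..b} (g i)"
  shows "integral {a..b} (\<lambda>x. (\<Sum>i<n. c i * g i x)\<^sup>2) = qf (\<lambda>i j. integral {a..b} (\<lambda>x. g i x * g j x)) n c"
  using int_quad[of n a b g c] assms by simp

lemma kernel:
  fixes g :: "nat \<Rightarrow> nat \<Rightarrow> real"
  assumes "finite I" "m < card I"
  shows "\<exists>c. (\<exists>i\<in>I. c i \<noteq> 0) \<and> (\<forall>j<m. (\<Sum>i\<in>I. g j i * c i) = 0)"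
  using assms
proof (induction m arbitrary: I g)
  case 0
  then obtain i0 where "i0 \<in> I" by fastforce
  then show ?case by (intro exI[of _ "\<lambda>i. if i = i0 then 1 else 0"]) auto
next
  case (Suc m)
  show ?case
  proof (cases "\<forall>i\<in>I. g m i = 0")
    case True
    obtain c where c: "\<exists>i\<in>I. c i \<noteq> 0" "\<forall>j<m. (\<Sum>i\<in>I. g j i * c i) = 0"
      using Suc.IH[of I g] Suc.prems by auto
    have "\<forall>j<Suc m. (\<Sum>i\<in>I. g j i * c i) = 0"
      using c(2) True by (auto simp: less_Suc_eq)
    then show ?thesis using c(1) by blast
  next
    case False
    then obtain i0 where i0: "i0 \<in> I" "g m i0 \<noteq> 0" by blast
    define I' where "I' = I - {i0}"
    have fI': "finite I'" unfolding I'_def using Suc.prems by simp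
    have cI': "m < card I'" unfolding I'_def using Suc.prems i0 by (simp add: card_Diff_singleton)
    define g' where "g' j i = g j i - g j i0 * g m i / g m i0" for j i
    obtain c' where c': "\<exists>i\<in>I'. c' i \<noteq> 0" "\<forall>j<m. (\<Sum>i\<in>I'. g' j i * c' i) = 0"
      using Suc.IH[OF fI' cI', of g'] by blast
    define Sm where "Sm = (\<Sum>i\<in>I'. g m i * c' i)"
    define c where "c = c'(i0 := - Sm / g m i0)"
    have split: "(\<Sum>i\<in>I. g j i * c i) = g j i0 * c i0 + (\<Sum>i\<in>I'. g j i * c' i)" for j
    proof -
      have "(\<Sum>i\<in>I. g j i * c i) = g j i0 * c i0 + (\<Sum>i\<in>I'. g j i * c i)"
        unfolding I'_def using Suc.prems(1) i0(1) by (simp add: sum.remove)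
      moreover have "(\<Sum>i\<in>I'. g j i * c i) = (\<Sum>i\<in>I'. g j i * c' i)"
        by (intro sum.cong refl) (auto simp: c_def I'_def)
      ultimately show ?thesis by simp
    qed
    have nz: "\<exists>i\<in>I. c i \<noteq> 0" using c'(1) by (auto simp: c_def I'_def)
    have "(\<Sum>i\<in>I. g j i * c i) = 0" if j: "j < Suc m" for j
    proof (cases "j = m")
      case True
      then show ?thesis unfolding split using i0(2) by (simp add: c_def Sm_def)
    next
      case False
      then have jm: "j < m" using j by simp
      have "0 = (\<Sum>i\<in>I'. g' j i * c' i)" using c'(2) jm by simp
      also have "\<dots> = (\<Sum>i\<in>I'. g j i * c' i) - g j i0 / g m i0 * Sm"
        unfolding g'_def Sm_def sum_distrib_left by (simp add: sum_subtractf algebra_simps)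
      finally have "(\<Sum>i\<in>I'. g j i * c' i) = g j i0 / g m i0 * Sm" by simp
      then show ?thesis unfolding split by (simp add: c_def)
    qed
    then show ?thesis using nz by blast
  qed
qed

lemma C1_D:
  assumes "u C1_differentiable_on UNIV"
  shows "\<exists>D. (\<forall>x. (u has_real_derivative D x) (at x)) \<and> continuous_on UNIV D"
  using assms unfolding C1_differentiable_on_def has_real_derivative_iff_has_vector_derivative by blast

lemma choose_D:
  assumes "\<forall>i<n. f i C1_differentiable_on UNIV"
  shows "\<exists>D. \<forall>i<n. (\<forall>x. (f i has_real_derivative D i x) (at x)) \<and> continuous_on UNIV (D i)"
proof -
  have "\<forall>i. \<exists>Di. i < n \<longrightarrow> (\<forall>x. (f i has_real_derivative Di x) (at x)) \<and> continuous_on UNIV Di"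
    using assms C1_D by blast
  then show ?thesis by metis
qed

lemma lincomb_deriv:
  assumes "\<And>i. i < n \<Longrightarrow> (f i has_real_derivative D i x) (at x)"
  shows "(lincomb f c n has_real_derivative (\<Sum>i<n. c i * D i x)) (at x)"
  unfolding lincomb_def by (auto intro!: derivative_eq_intros assms simp: mult.commute)

lemma interval_repr:
  assumes "adm (\<lambda>u. u C1_differentiable_on UNIV) (mass_int b) n f" "b \<ge> 0"
  shows "quad_repr (robin_form_int \<alpha> b) n f \<and> quad_repr (mass_int b) n f"
proof -
  have "\<forall>i<n. f i C1_differentiable_on UNIV" using assms unfolding adm_def by blast
  then obtain D where D: "\<And>i. i < n \<Longrightarrow> (\<forall>x. (f i has_real_derivative D i x) (at x)) \<and> continuous_on UNIV (D i)"
    using choose_D by blast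
  have cf: "continuous_on {0..b} (f i)" if "i < n" for i
    using D[OF that] by (intro cont_of_deriv) blast
  have cD: "continuous_on {0..b} (D i)" if "i < n" for i
    using D[OF that] continuous_on_subset by blast
  have dl: "deriv (lincomb f c n) x = (\<Sum>i<n. c i * D i x)" for c x
    by (rule DERIV_imp_deriv, rule lincomb_deriv) (use D in blast)
  have "robin_form_int \<alpha> b (lincomb f c n) =
      qf (\<lambda>i j. integral {0..b} (\<lambda>x. D i x * D j x) + \<alpha> * (f i 0 * f j 0 + f i b * f j b)) n c" for c
  proof -
    have "robin_form_int \<alpha> b (lincomb f c n) = integral {0..b} (\<lambda>x. (\<Sum>i<n. c i * D i x)\<^sup>2)
        + \<alpha> * ((\<Sum>i<n. c i * f i 0)\<^sup>2 + (\<Sum>i<n. c i * f i b)\<^sup>2)"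
      unfolding robin_form_int_def dl by (simp add: lincomb_def)
    also have "\<dots> = qf (\<lambda>i j. integral {0..b} (\<lambda>x. D i x * D j x)) n c
        + \<alpha> * (qf (\<lambda>i j. f i 0 * f j 0) n c + qf (\<lambda>i j. f i b * f j b) n c)"
      by (subst int_quad_real[OF cD]) (auto simp: point_quad)
    also have "\<dots> = qf (\<lambda>i j. integral {0..b} (\<lambda>x. D i x * D j x) + \<alpha> * (f i 0 * f j 0 + f i b * f j b)) n c"
      by (simp add: qf_add qf_scale)
    finally show ?thesis .
  qed
  moreover have "mass_int b (lincomb f c n) = qf (\<lambda>i j. integral {0..b} (\<lambda>x. f i x * f j x)) n c" for c
    unfolding mass_int_def lincomb_def by (rule int_quad_real[OF cf])
  ultimately show ?thesis unfolding quad_repr_def by blast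
qed

lemma integral_split_n:
  fixes h :: "real \<Rightarrow> real"
  assumes "continuous_on UNIV h" "d \<ge> 0"
  shows "integral {a..a + real n * d} h = (\<Sum>j<n. integral {a + real j * d .. a + real (Suc j) * d} h)"
proof (induction n)
  case 0
  then show ?case by simp
next
  case (Suc n)
  have "integral {a..a + real n * d} h + integral {a + real n * d..a + real (Suc n) * d} h
      = integral {a..a + real (Suc n) * d} h"
    using assms(2)
    by (intro Henstock_Kurzweil_Integration.integral_combine integrable_continuous_interval continuous_on_subset[OF assms(1)])
       (auto simp: algebra_simps)
  then show ?case using Suc.IH by simp
qed

lemma interval_low:
  assumes "adm (\<lambda>u. u C1_differentiable_on UNIV) (mass_int b) n f" "b > 0" "n \<ge> 1" "\<alpha> > 0"
  shows "\<exists>c. (\<exists>i<n. c i \<noteq> 0) \<and> mu \<alpha> (b / real n) * mass_int b (lincomb f c n) \<le> robin_form_int \<alpha> b (lincomb f c n)"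
proof -
  have "\<forall>i<n. f i C1_differentiable_on UNIV" using assms unfolding adm_def by blast
  then obtain D where D: "\<And>i. i < n \<Longrightarrow> (\<forall>x. (f i has_real_derivative D i x) (at x)) \<and> continuous_on UNIV (D i)"
    using choose_D by blast
  define h where "h = b / real n"
  have h0: "h > 0" unfolding h_def using assms by simp
  define t where "t j = real j * h" for j :: nat
  have tn: "t n = b" unfolding t_def h_def using assms by simp
  obtain c where c: "\<exists>i\<in>{..<n}. c i \<noteq> 0" "\<forall>j<n - 1. (\<Sum>i\<in>{..<n}. f i (t (Suc j)) * c i) = 0"
    using kernel[of "{..<n}" "n - 1" "\<lambda>j i. f i (t (Suc j))"] assms by auto
  define u where "u = lincomb f c n"
  define u' where "u' x = (\<Sum>i<n. c i * D i x)" for x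
  have du: "(u has_real_derivative u' x) (at x)" for x
    unfolding u_def u'_def by (rule lincomb_deriv) (use D in blast)
  have cu': "continuous_on UNIV u'" unfolding u'_def
    by (intro continuous_intros) (use D in blast)
  have cu: "continuous_on UNIV u" using du by (intro cont_of_deriv) blast
  have dl: "deriv u x = u' x" for x using du by (rule DERIV_imp_deriv)
  have uz: "u (t j) = 0" if "1 \<le> j" "j < n" for j
  proof -
    have jj: "Suc (j - 1) = j" "j - 1 < n - 1" using that by auto
    have "(\<Sum>i\<in>{..<n}. f i (t (Suc (j - 1))) * c i) = 0" using c(2) jj(2) by blast
    then have "(\<Sum>i\<in>{..<n}. f i (t j) * c i) = 0" unfolding jj(1) .
    then show ?thesis unfolding u_def lincomb_def by (simp add: mult.commute)
  qed
  have piece: "mu \<alpha> h * integral {t j..t (Suc j)} (\<lambda>x. (u x)\<^sup>2)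
      \<le> integral {t j..t (Suc j)} (\<lambda>x. (u' x)\<^sup>2) + \<alpha> * ((u (t j))\<^sup>2 + (u (t (Suc j)))\<^sup>2)" for j
  proof -
    have "t (Suc j) - t j = h" unfolding t_def by (simp add: algebra_simps)
    moreover have "t j < t (Suc j)" unfolding t_def using h0 by (simp add: mult_strict_right_mono)
    ultimately show ?thesis
      using poincare[OF assms(4), of "t j" "t (Suc j)" u u'] du continuous_on_subset[OF cu'] by auto
  qed
  have sumP: "(\<Sum>j<n. mu \<alpha> h * integral {t j..t (Suc j)} (\<lambda>x. (u x)\<^sup>2))
      \<le> (\<Sum>j<n. integral {t j..t (Suc j)} (\<lambda>x. (u' x)\<^sup>2) + \<alpha> * ((u (t j))\<^sup>2 + (u (t (Suc j)))\<^sup>2))"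
    by (intro sum_mono piece)
  have spl: "integral {0..b} g = (\<Sum>j<n. integral {t j..t (Suc j)} g)" if "continuous_on UNIV g" for g :: "real \<Rightarrow> real"
    using integral_split_n[OF that, of h 0 n] h0 tn unfolding t_def by simp
  have s1: "(\<Sum>j<n. (u (t j))\<^sup>2) = (u 0)\<^sup>2"
  proof -
    have "(\<Sum>j<n. (u (t j))\<^sup>2) = (\<Sum>j<n. if j = 0 then (u 0)\<^sup>2 else 0)"
    proof (intro sum.cong refl)
      fix j assume "j \<in> {..<n}"
      then show "(u (t j))\<^sup>2 = (if j = 0 then (u 0)\<^sup>2 else 0)"
        using uz[of j] by (cases "j = 0") (auto simp: t_def)
    qed
    then show ?thesis using assms(3) by simp
  qed
  have s2: "(\<Sum>j<n. (u (t (Suc j)))\<^sup>2) = (u b)\<^sup>2"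
  proof -
    have "(\<Sum>j<n. (u (t (Suc j)))\<^sup>2) = (\<Sum>j<n. if j = n - 1 then (u b)\<^sup>2 else 0)"
    proof (intro sum.cong refl)
      fix j assume "j \<in> {..<n}"
      then show "(u (t (Suc j)))\<^sup>2 = (if j = n - 1 then (u b)\<^sup>2 else 0)"
        using uz[of "Suc j"] tn assms(3) by (cases "j = n - 1") auto
    qed
    then show ?thesis using assms(3) by simp
  qed
  have "mu \<alpha> h * mass_int b u = (\<Sum>j<n. mu \<alpha> h * integral {t j..t (Suc j)} (\<lambda>x. (u x)\<^sup>2))"
  proof -
    have cu2: "continuous_on UNIV (\<lambda>x. (u x)\<^sup>2)" by (intro continuous_intros cu)
    show ?thesis unfolding mass_int_def spl[OF cu2] sum_distrib_left ..
  qed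
  also have "\<dots> \<le> (\<Sum>j<n. integral {t j..t (Suc j)} (\<lambda>x. (u' x)\<^sup>2) + \<alpha> * ((u (t j))\<^sup>2 + (u (t (Suc j)))\<^sup>2))"
    by (rule sumP)
  also have "\<dots> = integral {0..b} (\<lambda>x. (u' x)\<^sup>2) + \<alpha> * ((u 0)\<^sup>2 + (u b)\<^sup>2)"
    unfolding sum.distrib sum_distrib_left[symmetric] s1 s2
    by (subst spl) (auto intro!: continuous_intros cu')
  also have "\<dots> = robin_form_int \<alpha> b u" unfolding robin_form_int_def dl ..
  finally show ?thesis using c(1) unfolding u_def h_def by auto
qed

lemma poly_adm:
  assumes "b > 0"
  shows "adm (\<lambda>u. u C1_differentiable_on UNIV) (mass_int b) n (\<lambda>i x. x ^ i)"
  unfolding adm_def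
proof (intro conjI allI impI)
  fix i assume "i < n"
  have "((\<lambda>x::real. x ^ i) has_vector_derivative real i * x ^ (i - Suc 0)) (at x)" for x
    unfolding has_real_derivative_iff_has_vector_derivative[symmetric]
    by (rule DERIV_pow)
  moreover have "continuous_on UNIV (\<lambda>x::real. real i * x ^ (i - Suc 0))" by (intro continuous_intros)
  ultimately show "(\<lambda>x. x ^ i) C1_differentiable_on UNIV" unfolding C1_differentiable_on_def
    by (intro exI[of _ "\<lambda>x. real i * x ^ (i - Suc 0)"]) auto
next
  fix c :: "nat \<Rightarrow> real" assume c: "\<exists>i<n. c i \<noteq> 0"
  then obtain k where k: "k < n" "c k \<noteq> 0" by blast
  define p where "p x = (\<Sum>i<n. c i * x ^ i)" for x :: real
  have lp: "lincomb (\<lambda>i x. x ^ i) c n = p" unfolding lincomb_def p_def by simp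
  have cp: "continuous_on {0..b} (\<lambda>x. (p x)\<^sup>2)" unfolding p_def by (intro continuous_intros)
  have int: "(\<lambda>x. (p x)\<^sup>2) integrable_on {0..b}" using cp by (rule integrable_continuous_interval)
  have ge: "integral {0..b} (\<lambda>x. (p x)\<^sup>2) \<ge> 0" by (intro integral_nonneg int) auto
  have "integral {0..b} (\<lambda>x. (p x)\<^sup>2) \<noteq> 0"
  proof
    assume z: "integral {0..b} (\<lambda>x. (p x)\<^sup>2) = 0"
    have hi: "((\<lambda>x. (p x)\<^sup>2) has_integral 0) (cbox 0 b)" using int z by (metis box_real(2) integrable_integral)
    have zero: "p x = 0" if "x \<in> {0..b}" for x
    proof -
      have "(p x)\<^sup>2 = 0" using has_integral_0_cbox_imp_0[of 0 b "\<lambda>x. (p x)\<^sup>2", OF _ _ hi] cp that assms by auto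
      then show ?thesis by simp
    qed
    have nN: "{..<n} = {..n - 1}" using k by auto
    have fin: "finite {z. (\<Sum>i\<le>n - 1. c i * z ^ i) = 0}"
      by (rule polyfun_roots_finite[of c k]) (use k in auto)
    have "{0..b} \<subseteq> {z. (\<Sum>i\<le>n - 1. c i * z ^ i) = 0}" using zero unfolding p_def nN by auto
    then have "finite {0..b}" using fin finite_subset by blast
    then show False using assms infinite_Icc[of 0 b] by simp
  qed
  then show "mass_int b (lincomb (\<lambda>i x. x ^ i) c n) > 0" unfolding mass_int_def lp using ge by simp
qed

lemma interval_lower:
  assumes "\<alpha> > 0" "b > 0" "n \<ge> 1"
  shows "mu \<alpha> (b / real n) \<le> robin_eig_interval \<alpha> b n"
  unfolding robin_eig_interval_def
  by (rule minmax_lower) (use poly_adm[OF assms(2)] interval_repr interval_low assms in \<open>auto simp: less_imp_le\<close>)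


definition partials :: "(real \<times> real \<Rightarrow> real) \<Rightarrow> (real \<times> real \<Rightarrow> real) \<Rightarrow> (real \<times> real \<Rightarrow> real) \<Rightarrow> bool" where
  "partials u P1 P2 \<longleftrightarrow> continuous_on UNIV P1 \<and> continuous_on UNIV P2 \<and>
     (\<forall>z. (u has_derivative (\<lambda>v. fst v * P1 z + snd v * P2 z)) (at z))"

lemma C1_plane_partials:
  assumes "C1_plane u"
  shows "partials u (\<lambda>z. frechet_derivative u (at z) (1,0)) (\<lambda>z. frechet_derivative u (at z) (0,1))"
proof -
  obtain D :: "real \<times> real \<Rightarrow> (real \<times> real) \<Rightarrow>\<^sub>L real" where
    D: "\<And>x. (u has_derivative blinfun_apply (D x)) (at x)" "continuous_on UNIV D"
    using assms unfolding C1_plane_def by blast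
  have fd: "frechet_derivative u (at z) = blinfun_apply (D z)" for z
    using frechet_derivative_at[OF D(1)] by simp
  have lin: "blinfun_apply (D z) v = fst v * D z (1,0) + snd v * D z (0,1)" for z v
  proof -
    have "v = fst v *\<^sub>R (1,0) + snd v *\<^sub>R (0,1)" by (cases v) simp
    then have "D z v = D z (fst v *\<^sub>R (1,0) + snd v *\<^sub>R (0,1))" by (rule arg_cong)
    also have "\<dots> = fst v * D z (1,0) + snd v * D z (0,1)"
      by (simp only: blinfun.add_right blinfun.scaleR_right real_scaleR_def)
    finally show ?thesis .
  qed
  have c1: "continuous_on UNIV (\<lambda>z. D z (1,0))" by (intro blinfun.continuous_on D(2) continuous_on_const)
  have c2: "continuous_on UNIV (\<lambda>z. D z (0,1))" by (intro blinfun.continuous_on D(2) continuous_on_const)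
  have "(u has_derivative (\<lambda>v. fst v * D z (1,0) + snd v * D z (0,1))) (at z)" for z
    by (rule has_derivative_eq_rhs[OF D(1)[of z]]) (rule ext, rule lin)
  then show ?thesis unfolding partials_def fd using c1 c2 by simp
qed

lemma partials_C1_plane:
  assumes "partials u P1 P2"
  shows "C1_plane u"
proof -
  have bl: "bounded_linear (\<lambda>v::real\<times>real. fst v * a + snd v * b)" for a b :: real
  proof -
    have "bounded_linear (\<lambda>v::real\<times>real. fst v * a)"
      using bounded_linear_compose[OF bounded_linear_mult_left[of a] bounded_linear_fst] by (simp add: o_def)
    moreover have "bounded_linear (\<lambda>v::real\<times>real. snd v * b)"
      using bounded_linear_compose[OF bounded_linear_mult_left[of b] bounded_linear_snd] by (simp add: o_def)
    ultimately show ?thesis by (rule bounded_linear_add)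
  qed
  define D where "D z = Blinfun (\<lambda>v::real\<times>real. fst v * P1 z + snd v * P2 z)" for z
  have Dapp: "blinfun_apply (D z) = (\<lambda>v. fst v * P1 z + snd v * P2 z)" for z
    unfolding D_def by (rule bounded_linear_Blinfun_apply[OF bl])
  have "continuous_on UNIV D"
  proof (rule continuous_on_blinfun_componentwise)
    fix i :: "real \<times> real" assume "i \<in> Basis"
    show "continuous_on UNIV (\<lambda>x. blinfun_apply (D x) i)"
      unfolding Dapp using assms unfolding partials_def by (intro continuous_intros) auto
  qed
  moreover have "\<forall>x. (u has_derivative blinfun_apply (D x)) (at x)"
    unfolding Dapp using assms unfolding partials_def by blast
  ultimately show ?thesis unfolding C1_plane_def by blast
qed

lemma partials_grad:
  assumes "partials u P1 P2"
  shows "grad_sq u z = (P1 z)\<^sup>2 + (P2 z)\<^sup>2"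
proof -
  have hd: "(u has_derivative (\<lambda>v. fst v * P1 z + snd v * P2 z)) (at z)"
    using assms unfolding partials_def by blast
  have "frechet_derivative u (at z) = (\<lambda>v. fst v * P1 z + snd v * P2 z)"
    using frechet_derivative_at[OF hd] by (rule sym)
  then show ?thesis unfolding grad_sq_def by simp
qed

lemma partials_cont:
  assumes "partials u P1 P2"
  shows "continuous_on S u"
proof -
  have "\<And>z. (u has_derivative (\<lambda>v. fst v * P1 z + snd v * P2 z)) (at z)"
    using assms unfolding partials_def by blast
  then show ?thesis
    by (intro continuous_at_imp_continuous_on ballI has_derivative_continuous) blast
qed

lemma partials_x:
  assumes "partials u P1 P2"
  shows "((\<lambda>x. u (x, y)) has_real_derivative P1 (x, y)) (at x)"
proof -
  have d1: "((\<lambda>x::real. (x, y)) has_derivative (\<lambda>h. (h, 0))) (at x)"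
    by (auto intro!: derivative_eq_intros)
  have "(u has_derivative (\<lambda>v. fst v * P1 (x,y) + snd v * P2 (x,y))) (at (x, y))"
    using assms unfolding partials_def by blast
  from has_derivative_compose[OF d1 this]
  have "((\<lambda>x. u (x, y)) has_derivative (\<lambda>h. h * P1 (x,y))) (at x)" by simp
  then show ?thesis unfolding has_field_derivative_def
    by (rule has_derivative_eq_rhs) (auto simp: mult.commute)
qed

lemma partials_y:
  assumes "partials u P1 P2"
  shows "((\<lambda>y. u (x, y)) has_real_derivative P2 (x, y)) (at y)"
proof -
  have d1: "((\<lambda>y::real. (x, y)) has_derivative (\<lambda>h. (0, h))) (at y)"
    by (auto intro!: derivative_eq_intros)
  have "(u has_derivative (\<lambda>v. fst v * P1 (x,y) + snd v * P2 (x,y))) (at (x, y))"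
    using assms unfolding partials_def by blast
  from has_derivative_compose[OF d1 this]
  have "((\<lambda>y. u (x, y)) has_derivative (\<lambda>h. h * P2 (x,y))) (at y)" by simp
  then show ?thesis unfolding has_field_derivative_def
    by (rule has_derivative_eq_rhs) (auto simp: mult.commute)
qed

lemma cont_sx:
  fixes g :: "real \<times> real \<Rightarrow> real"
  assumes "continuous_on UNIV g"
  shows "continuous_on UNIV (\<lambda>x. g (x, c))" "continuous_on UNIV (\<lambda>y. g (c, y))"
  by (rule continuous_on_compose2[OF assms], auto intro!: continuous_intros)+

lemma fub_xy:
  fixes g :: "real \<times> real \<Rightarrow> real"
  assumes "continuous_on UNIV g"
  shows "integral (cbox (a,c) (b,d)) g = integral {a..b} (\<lambda>x. integral {c..d} (\<lambda>y. g (x,y)))"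
  using integral_prod_continuous[of a c b d g] continuous_on_subset[OF assms] by (simp add: box_real)

lemma fub_yx:
  fixes g :: "real \<times> real \<Rightarrow> real"
  assumes "continuous_on UNIV g"
  shows "integral (cbox (a,c) (b,d)) g = integral {c..d} (\<lambda>y. integral {a..b} (\<lambda>x. g (x,y)))"
proof -
  have e: "(\<lambda>(x, y). g (x, y)) = g" by auto
  have "integral {a..b} (\<lambda>x. integral {c..d} (\<lambda>y. g (x,y))) = integral {c..d} (\<lambda>y. integral {a..b} (\<lambda>x. g (x,y)))"
    using integral_swap_continuous[of a c b d "\<lambda>x y. g (x,y)"] continuous_on_subset[OF assms]
    by (simp add: box_real e)
  then show ?thesis using fub_xy[OF assms] by simp
qed

lemma param_cont:
  fixes g :: "real \<times> real \<Rightarrow> real"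
  assumes "continuous_on UNIV g"
  shows "continuous_on UNIV (\<lambda>x. integral {c..d} (\<lambda>y. g (x,y)))"
    "continuous_on UNIV (\<lambda>y. integral {c..d} (\<lambda>x. g (x,y)))"
proof -
  have e: "(\<lambda>(x, y). g (x, y)) = g" by auto
  have "continuous_on UNIV (\<lambda>x. integral (cbox c d) (\<lambda>y. g (x,y)))"
    by (rule integral_continuous_on_param) (use continuous_on_subset[OF assms] e in auto)
  then show "continuous_on UNIV (\<lambda>x. integral {c..d} (\<lambda>y. g (x,y)))" by (simp add: box_real)
  have cg': "continuous_on UNIV (\<lambda>z. g (snd z, fst z))"
    by (rule continuous_on_compose2[OF assms]) (auto intro!: continuous_intros)
  have e2: "(\<lambda>(y, x). g (x, y)) = (\<lambda>z. g (snd z, fst z))" by auto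
  have "continuous_on UNIV (\<lambda>y. integral (cbox c d) (\<lambda>x. g (x,y)))"
    by (rule integral_continuous_on_param) (use continuous_on_subset[OF cg'] e2 in auto)
  then show "continuous_on UNIV (\<lambda>y. integral {c..d} (\<lambda>x. g (x,y)))" by (simp add: box_real)
qed

lemma shift_int: "integral {0..s} (\<lambda>t. f (p + t)) = integral {p..p+s} (f :: real \<Rightarrow> real)"
  using integral_shift_Icc_real[of 0 s f p] by (simp add: o_def add.commute)

lemma int_le_cont:
  fixes F G :: "real \<Rightarrow> real"
  assumes "continuous_on UNIV F" "continuous_on UNIV G" "\<And>x. x \<in> {a..b} \<Longrightarrow> F x \<le> G x"
  shows "integral {a..b} F \<le> integral {a..b} G"
  by (intro integral_le integrable_continuous_interval continuous_on_subset[OF assms(1)]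
      continuous_on_subset[OF assms(2)] assms(3)) auto

lemma int3:
  fixes A B C :: "real \<Rightarrow> real"
  assumes "A integrable_on S" "B integrable_on S" "C integrable_on S"
  shows "integral S (\<lambda>x. A x + a * (B x + C x)) = integral S A + a * (integral S B + integral S C)"
proof -
  have "integral S (\<lambda>x. A x + a * (B x + C x)) = integral S A + integral S (\<lambda>x. a * (B x + C x))"
    by (rule integral_add[OF assms(1) integrable_rmult[OF integrable_add[OF assms(2,3)]]])
  also have "integral S (\<lambda>x. a * (B x + C x)) = a * integral S (\<lambda>x. B x + C x)" by simp
  also have "integral S (\<lambda>x. B x + C x) = integral S B + integral S C" by (rule integral_add[OF assms(2,3)])
  finally show ?thesis .
qed

lemma square_low:
  assumes "\<alpha> > 0" "s > 0" "partials u P1 P2"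
  shows "2 * mu \<alpha> s * mass_sq p s u \<le> robin_form_sq \<alpha> p s u"
proof -
  have cu: "continuous_on UNIV u" using partials_cont[OF assms(3)] .
  have cP1: "continuous_on UNIV P1" and cP2: "continuous_on UNIV P2"
    using assms(3) unfolding partials_def by auto
  have cu2: "continuous_on UNIV (\<lambda>z. (u z)\<^sup>2)" by (intro continuous_intros cu)
  have cP12: "continuous_on UNIV (\<lambda>z. (P1 z)\<^sup>2)" by (intro continuous_intros cP1)
  have cP22: "continuous_on UNIV (\<lambda>z. (P2 z)\<^sup>2)" by (intro continuous_intros cP2)
  define B where "B = cbox (p,0) (p+s,s)"
  have Y: "mu \<alpha> s * integral B (\<lambda>z. (u z)\<^sup>2) \<le> integral B (\<lambda>z. (P2 z)\<^sup>2)
      + \<alpha> * (integral {0..s} (\<lambda>t. (u (p+t,0))\<^sup>2) + integral {0..s} (\<lambda>t. (u (p+t,s))\<^sup>2))"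
  proof -
    have pt: "mu \<alpha> s * integral {0..s} (\<lambda>y. (u (x,y))\<^sup>2)
        \<le> integral {0..s} (\<lambda>y. (P2 (x,y))\<^sup>2) + \<alpha> * ((u (x,0))\<^sup>2 + (u (x,s))\<^sup>2)" for x
      using poincare[OF assms(1), of 0 s "\<lambda>y. u (x,y)" "\<lambda>y. P2 (x,y)"] assms(2)
        partials_y[OF assms(3)] cont_sx(2)[OF cP2] continuous_on_subset by force
    have "mu \<alpha> s * integral B (\<lambda>z. (u z)\<^sup>2) = integral {p..p+s} (\<lambda>x. mu \<alpha> s * integral {0..s} (\<lambda>y. (u (x,y))\<^sup>2))"
      unfolding B_def fub_xy[OF cu2] by simp
    also have "\<dots> \<le> integral {p..p+s} (\<lambda>x. integral {0..s} (\<lambda>y. (P2 (x,y))\<^sup>2) + \<alpha> * ((u (x,0))\<^sup>2 + (u (x,s))\<^sup>2))"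
      by (rule int_le_cont[OF _ _ pt]) (auto intro!: continuous_intros param_cont cu2 cP22 cont_sx cu)
    also have "\<dots> = integral {p..p+s} (\<lambda>x. integral {0..s} (\<lambda>y. (P2 (x,y))\<^sup>2))
        + \<alpha> * (integral {p..p+s} (\<lambda>x. (u (x,0))\<^sup>2) + integral {p..p+s} (\<lambda>x. (u (x,s))\<^sup>2))"
      by (rule int3) (auto intro!: integrable_continuous_interval continuous_intros
          continuous_on_subset[OF param_cont(1)[OF cP22]] continuous_on_subset[OF cont_sx(1)[OF cu]])
    also have "\<dots> = integral B (\<lambda>z. (P2 z)\<^sup>2)
      + \<alpha> * (integral {0..s} (\<lambda>t. (u (p+t,0))\<^sup>2) + integral {0..s} (\<lambda>t. (u (p+t,s))\<^sup>2))"
      unfolding B_def fub_xy[OF cP22] shift_int[of s "\<lambda>x. (u (x,_))\<^sup>2"] ..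
    finally show ?thesis .
  qed
  have X: "mu \<alpha> s * integral B (\<lambda>z. (u z)\<^sup>2) \<le> integral B (\<lambda>z. (P1 z)\<^sup>2)
      + \<alpha> * (integral {0..s} (\<lambda>t. (u (p,t))\<^sup>2) + integral {0..s} (\<lambda>t. (u (p+s,t))\<^sup>2))"
  proof -
    have pt: "mu \<alpha> s * integral {p..p+s} (\<lambda>x. (u (x,y))\<^sup>2)
        \<le> integral {p..p+s} (\<lambda>x. (P1 (x,y))\<^sup>2) + \<alpha> * ((u (p,y))\<^sup>2 + (u (p+s,y))\<^sup>2)" for y
      using poincare[OF assms(1), of p "p+s" "\<lambda>x. u (x,y)" "\<lambda>x. P1 (x,y)"] assms(2)
        partials_x[OF assms(3)] cont_sx(1)[OF cP1] continuous_on_subset by force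
    have "mu \<alpha> s * integral B (\<lambda>z. (u z)\<^sup>2) = integral {0..s} (\<lambda>y. mu \<alpha> s * integral {p..p+s} (\<lambda>x. (u (x,y))\<^sup>2))"
      unfolding B_def fub_yx[OF cu2] by simp
    also have "\<dots> \<le> integral {0..s} (\<lambda>y. integral {p..p+s} (\<lambda>x. (P1 (x,y))\<^sup>2) + \<alpha> * ((u (p,y))\<^sup>2 + (u (p+s,y))\<^sup>2))"
      by (rule int_le_cont[OF _ _ pt]) (auto intro!: continuous_intros param_cont cu2 cP12 cont_sx cu)
    also have "\<dots> = integral {0..s} (\<lambda>y. integral {p..p+s} (\<lambda>x. (P1 (x,y))\<^sup>2))
        + \<alpha> * (integral {0..s} (\<lambda>y. (u (p,y))\<^sup>2) + integral {0..s} (\<lambda>y. (u (p+s,y))\<^sup>2))"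
      by (rule int3) (auto intro!: integrable_continuous_interval continuous_intros
          continuous_on_subset[OF param_cont(2)[OF cP12]] continuous_on_subset[OF cont_sx(2)[OF cu]])
    also have "\<dots> = integral B (\<lambda>z. (P1 z)\<^sup>2)
      + \<alpha> * (integral {0..s} (\<lambda>t. (u (p,t))\<^sup>2) + integral {0..s} (\<lambda>t. (u (p+s,t))\<^sup>2))"
      unfolding B_def fub_yx[OF cP12] ..
    finally show ?thesis .
  qed
  have G: "integral B (grad_sq u) = integral B (\<lambda>z. (P1 z)\<^sup>2) + integral B (\<lambda>z. (P2 z)\<^sup>2)"
    unfolding partials_grad[OF assms(3)] B_def
    by (intro integral_add integrable_continuous continuous_on_subset[OF cP12] continuous_on_subset[OF cP22]) auto
  show ?thesis using X Y G unfolding robin_form_sq_def mass_sq_def B_def[symmetric] by (simp add: algebra_simps)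
qed


lemma paste:
  fixes f g f' g' :: "real \<Rightarrow> real"
  assumes df: "\<And>x. (f has_real_derivative f' x) (at x)" and dg: "\<And>x. (g has_real_derivative g' x) (at x)"
    and cf: "continuous_on UNIV f'" and cg: "continuous_on UNIV g'"
    and e0: "f a = g a" and e1: "f' a = g' a"
  shows "((\<lambda>x. if x \<le> a then f x else g x) has_real_derivative (if x \<le> a then f' x else g' x)) (at x)"
    and "continuous_on UNIV (\<lambda>x. if x \<le> a then f' x else g' x)"
proof -
  have cl: "closure {..a} \<inter> closure {a<..} = {a}" by auto
  have "((\<lambda>x. if x \<in> {..a} then f x else g x) has_derivative
      (if x \<in> {..a} then (*) (f' x) else (*) (g' x))) (at x within ({..a} \<union> {a<..}))"
  proof (rule has_derivative_If_within_closures)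
    show "(f has_derivative (*) (f' x)) (at x within {..a} \<union> (closure {..a} \<inter> closure {a<..}))"
      using df[of x] unfolding has_field_derivative_def by (rule has_derivative_at_withinI)
    show "(g has_derivative (*) (g' x)) (at x within {a<..} \<union> (closure {..a} \<inter> closure {a<..}))"
      using dg[of x] unfolding has_field_derivative_def by (rule has_derivative_at_withinI)
    show "x \<in> closure {..a} \<Longrightarrow> x \<in> closure {a<..} \<Longrightarrow> f x = g x" using cl e0 by auto
    show "x \<in> closure {..a} \<Longrightarrow> x \<in> closure {a<..} \<Longrightarrow> (*) (f' x) = (*) (g' x)" using cl e1 by auto
    show "x \<in> {..a} \<union> {a<..}" by auto
  qed
  moreover have "{..a} \<union> {a<..} = (UNIV :: real set)" by auto
  moreover have "(\<lambda>x. if x \<in> {..a} then f x else g x) = (\<lambda>x. if x \<le> a then f x else g x)" by auto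
  moreover have "(if x \<in> {..a} then (*) (f' x) else (*) (g' x)) = (*) (if x \<le> a then f' x else g' x)" by auto
  ultimately show "((\<lambda>x. if x \<le> a then f x else g x) has_real_derivative (if x \<le> a then f' x else g' x)) (at x)"
    unfolding has_field_derivative_def by simp
  show "continuous_on UNIV (\<lambda>x. if x \<le> a then f' x else g' x)"
    by (rule continuous_on_cases_le[where h="\<lambda>x. x", of UNIV a f' g', simplified])
       (auto intro: continuous_on_subset[OF cf] continuous_on_subset[OF cg] e1)
qed

definition HH :: "real \<Rightarrow> real" where "HH z = 1 - 3 * z^2 + 2 * z^3"
definition KK :: "real \<Rightarrow> real" where "KK z = z - 2 * z^2 + z^3"
definition dHH :: "real \<Rightarrow> real" where "dHH z = - 6 * z + 6 * z^2"
definition dKK :: "real \<Rightarrow> real" where "dKK z = 1 - 4 * z + 3 * z^2"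

definition RR :: "real \<Rightarrow> real \<Rightarrow> real \<Rightarrow> real" where
  "RR \<alpha> s x = cos (th \<alpha> s) * HH ((x - s) / s) - om \<alpha> s * sin (th \<alpha> s) * s * KK ((x - s) / s)"
definition dRR :: "real \<Rightarrow> real \<Rightarrow> real \<Rightarrow> real" where
  "dRR \<alpha> s x = cos (th \<alpha> s) * dHH ((x - s) / s) / s - om \<alpha> s * sin (th \<alpha> s) * dKK ((x - s) / s)"

lemma RR_deriv:
  assumes "s > 0"
  shows "(RR \<alpha> s has_real_derivative dRR \<alpha> s x) (at x)"
  unfolding RR_def dRR_def HH_def KK_def dHH_def dKK_def using assms
  by (auto intro!: derivative_eq_intros simp: field_simps power2_eq_square power3_eq_cube)

lemma RR_vals:
  assumes "s > 0"
  shows "RR \<alpha> s (2 * s) = 0" "dRR \<alpha> s (2 * s) = 0"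
    "RR \<alpha> s s = cos (th \<alpha> s)" "dRR \<alpha> s s = - om \<alpha> s * sin (th \<alpha> s)"
  using assms unfolding RR_def dRR_def HH_def KK_def dHH_def dKK_def by auto

lemma dRR_cont: "s > 0 \<Longrightarrow> continuous_on UNIV (dRR \<alpha> s)"
  unfolding dRR_def dHH_def dKK_def by (intro continuous_intros) auto

definition hr1 :: "real \<Rightarrow> real \<Rightarrow> real \<Rightarrow> real" where
  "hr1 \<alpha> s x = (if x \<le> 2 * s then RR \<alpha> s x else 0)"
definition dhr1 :: "real \<Rightarrow> real \<Rightarrow> real \<Rightarrow> real" where
  "dhr1 \<alpha> s x = (if x \<le> 2 * s then dRR \<alpha> s x else 0)"

lemma hr1_deriv:
  assumes "s > 0"
  shows "(hr1 \<alpha> s has_real_derivative dhr1 \<alpha> s x) (at x)" "continuous_on UNIV (dhr1 \<alpha> s)"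
proof -
  have *: "\<And>x. ((\<lambda>x. 0::real) has_real_derivative 0) (at x)" by simp
  note P = paste[of "RR \<alpha> s" "dRR \<alpha> s" "\<lambda>x. 0" "\<lambda>x. 0" "2 * s", OF RR_deriv[OF assms] * dRR_cont[OF assms] continuous_on_const
      RR_vals(1)[OF assms] RR_vals(2)[OF assms]]
  show "(hr1 \<alpha> s has_real_derivative dhr1 \<alpha> s x) (at x)" using P(1)[of x] unfolding hr1_def[abs_def] dhr1_def .
  show "continuous_on UNIV (dhr1 \<alpha> s)" using P(2) unfolding dhr1_def[abs_def] .
qed

definition hr :: "real \<Rightarrow> real \<Rightarrow> real \<Rightarrow> real" where
  "hr \<alpha> s x = (if x \<le> s then phi \<alpha> s 0 x else hr1 \<alpha> s x)"
definition dhr :: "real \<Rightarrow> real \<Rightarrow> real \<Rightarrow> real" where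
  "dhr \<alpha> s x = (if x \<le> s then dphi \<alpha> s 0 x else dhr1 \<alpha> s x)"

lemma hr_deriv:
  assumes "s > 0"
  shows "(hr \<alpha> s has_real_derivative dhr \<alpha> s x) (at x)" "continuous_on UNIV (dhr \<alpha> s)"
proof -
  have e0: "phi \<alpha> s 0 s = hr1 \<alpha> s s" using phi_end_vals(2)[OF assms, of \<alpha> 0] RR_vals(3)[OF assms, of \<alpha>] assms
    by (simp add: hr1_def)
  have e1: "dphi \<alpha> s 0 s = dhr1 \<alpha> s s" using phi_end_vals(4)[OF assms, of \<alpha> 0] RR_vals(4)[OF assms, of \<alpha>] assms
    by (simp add: dhr1_def)
  note P = paste[of "phi \<alpha> s 0" "dphi \<alpha> s 0" "hr1 \<alpha> s" "dhr1 \<alpha> s" s, OF phi_deriv hr1_deriv(1)[OF assms]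
      dphi_cont hr1_deriv(2)[OF assms] e0 e1]
  show "(hr \<alpha> s has_real_derivative dhr \<alpha> s x) (at x)" using P(1)[of x] unfolding hr_def[abs_def] dhr_def .
  show "continuous_on UNIV (dhr \<alpha> s)" using P(2) unfolding dhr_def[abs_def] .
qed

definition hh :: "real \<Rightarrow> real \<Rightarrow> real \<Rightarrow> real" where
  "hh \<alpha> s x = (if x \<le> s / 2 then hr \<alpha> s (s - x) else hr \<alpha> s x)"
definition dhh :: "real \<Rightarrow> real \<Rightarrow> real \<Rightarrow> real" where
  "dhh \<alpha> s x = (if x \<le> s / 2 then - dhr \<alpha> s (s - x) else dhr \<alpha> s x)"

lemma dphi_mid: "dphi \<alpha> s p (p + s / 2) = 0"
  unfolding dphi_def by simp

lemma hh_deriv: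
  assumes "s > 0"
  shows "(hh \<alpha> s has_real_derivative dhh \<alpha> s x) (at x)" "continuous_on UNIV (dhh \<alpha> s)"
proof -
  have dl: "((\<lambda>x. hr \<alpha> s (s - x)) has_real_derivative - dhr \<alpha> s (s - x)) (at x)" for x
  proof -
    have "((\<lambda>x. s - x) has_real_derivative -1) (at x)" by (auto intro!: derivative_eq_intros)
    from DERIV_chain2[OF hr_deriv(1)[OF assms] this] show ?thesis by simp
  qed
  have cl: "continuous_on UNIV (\<lambda>x. - dhr \<alpha> s (s - x))"
    by (intro continuous_intros continuous_on_compose2[OF hr_deriv(2)[OF assms]]) auto
  have m: "dhr \<alpha> s (s / 2) = 0"
    using dphi_mid[of \<alpha> s 0] assms by (simp add: dhr_def)
  have e1: "- dhr \<alpha> s (s - s / 2) = dhr \<alpha> s (s / 2)" using m by simp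
  note P = paste[of "\<lambda>x. hr \<alpha> s (s - x)" "\<lambda>x. - dhr \<alpha> s (s - x)" "hr \<alpha> s" "dhr \<alpha> s" "s / 2",
      OF dl hr_deriv(1)[OF assms] cl hr_deriv(2)[OF assms] _ e1]
  show "(hh \<alpha> s has_real_derivative dhh \<alpha> s x) (at x)" using P(1)[of x] unfolding hh_def[abs_def] dhh_def by simp
  show "continuous_on UNIV (dhh \<alpha> s)" using P(2) unfolding dhh_def[abs_def] by simp
qed

lemma hh_on:
  assumes "s > 0" "0 \<le> x" "x \<le> s"
  shows "hh \<alpha> s x = phi \<alpha> s 0 x" "dhh \<alpha> s x = dphi \<alpha> s 0 x"
proof -
  have ps: "phi \<alpha> s 0 (s - x) = phi \<alpha> s 0 x" using phi_sym[of \<alpha> s 0 x] by simp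
  have ds: "dphi \<alpha> s 0 (s - x) = - dphi \<alpha> s 0 x" using dphi_sym[of \<alpha> s 0 x] by simp
  show "hh \<alpha> s x = phi \<alpha> s 0 x" unfolding hh_def hr_def using assms ps by auto
  show "dhh \<alpha> s x = dphi \<alpha> s 0 x" unfolding dhh_def dhr_def using assms ds by auto
qed

lemma hh_zero:
  assumes "s > 0" "x \<ge> 2 * s \<or> x \<le> - s"
  shows "hh \<alpha> s x = 0" "dhh \<alpha> s x = 0"
proof -
  have hr0: "hr \<alpha> s y = 0" "dhr \<alpha> s y = 0" if "y \<ge> 2 * s" for y
    using that assms RR_vals[OF assms(1), of \<alpha>] unfolding hr_def dhr_def hr1_def dhr1_def
    by (auto simp: antisym_conv)
  show "hh \<alpha> s x = 0" using assms hr0[of x] hr0[of "s - x"] unfolding hh_def by auto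
  show "dhh \<alpha> s x = 0" using assms hr0[of x] hr0[of "s - x"] unfolding dhh_def by auto
qed

lemma hh_cont: "s > 0 \<Longrightarrow> continuous_on UNIV (hh \<alpha> s)"
  using hh_deriv(1) by (intro cont_of_deriv) blast

definition gt :: "real \<Rightarrow> real \<Rightarrow> nat \<Rightarrow> real \<times> real \<Rightarrow> real" where
  "gt \<alpha> s i z = hh \<alpha> s (fst z - 2 * real i * s) * phi \<alpha> s 0 (snd z)"
definition gP1 :: "real \<Rightarrow> real \<Rightarrow> nat \<Rightarrow> real \<times> real \<Rightarrow> real" where
  "gP1 \<alpha> s i z = dhh \<alpha> s (fst z - 2 * real i * s) * phi \<alpha> s 0 (snd z)"
definition gP2 :: "real \<Rightarrow> real \<Rightarrow> nat \<Rightarrow> real \<times> real \<Rightarrow> real" where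
  "gP2 \<alpha> s i z = hh \<alpha> s (fst z - 2 * real i * s) * dphi \<alpha> s 0 (snd z)"

lemma gt_partials:
  assumes "s > 0"
  shows "partials (gt \<alpha> s i) (gP1 \<alpha> s i) (gP2 \<alpha> s i)"
  unfolding partials_def
proof (intro conjI allI)
  have c1: "continuous_on UNIV (\<lambda>z::real\<times>real. dhh \<alpha> s (fst z - 2 * real i * s))"
    by (rule continuous_on_compose2[OF hh_deriv(2)[OF assms]]) (auto intro!: continuous_intros)
  have c2: "continuous_on UNIV (\<lambda>z::real\<times>real. hh \<alpha> s (fst z - 2 * real i * s))"
    by (rule continuous_on_compose2[OF hh_cont[OF assms]]) (auto intro!: continuous_intros)
  have c3: "continuous_on UNIV (\<lambda>z::real\<times>real. phi \<alpha> s 0 (snd z))"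
    by (rule continuous_on_compose2[OF phi_cont]) (auto intro!: continuous_intros)
  have c4: "continuous_on UNIV (\<lambda>z::real\<times>real. dphi \<alpha> s 0 (snd z))"
    by (rule continuous_on_compose2[OF dphi_cont]) (auto intro!: continuous_intros)
  show "continuous_on UNIV (gP1 \<alpha> s i)" unfolding gP1_def by (intro continuous_intros c1 c3)
  show "continuous_on UNIV (gP2 \<alpha> s i)" unfolding gP2_def by (intro continuous_intros c2 c4)
  fix z :: "real \<times> real"
  have da: "((\<lambda>z::real\<times>real. fst z - 2 * real i * s) has_derivative (\<lambda>v. fst v)) (at z)"
    by (auto intro!: derivative_eq_intros)
  have db: "((\<lambda>z::real\<times>real. snd z) has_derivative (\<lambda>v. snd v)) (at z)"
    by (auto intro!: derivative_eq_intros)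
  have h1: "(hh \<alpha> s has_derivative (*) (dhh \<alpha> s (fst z - 2 * real i * s))) (at (fst z - 2 * real i * s))"
    using hh_deriv(1)[OF assms] unfolding has_field_derivative_def by blast
  have h2: "(phi \<alpha> s 0 has_derivative (*) (dphi \<alpha> s 0 (snd z))) (at (snd z))"
    using phi_deriv unfolding has_field_derivative_def by blast
  have f1: "((\<lambda>z. hh \<alpha> s (fst z - 2 * real i * s)) has_derivative (\<lambda>v. dhh \<alpha> s (fst z - 2 * real i * s) * fst v)) (at z)"
    using has_derivative_compose[OF da h1] .
  have f2: "((\<lambda>z. phi \<alpha> s 0 (snd z)) has_derivative (\<lambda>v. dphi \<alpha> s 0 (snd z) * snd v)) (at z)"
    using has_derivative_compose[OF db h2] .
  show "(gt \<alpha> s i has_derivative (\<lambda>v. fst v * gP1 \<alpha> s i z + snd v * gP2 \<alpha> s i z)) (at z)"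
    unfolding gt_def[abs_def]
    by (rule has_derivative_eq_rhs[OF has_derivative_mult[OF f1 f2]]) (auto simp: gP1_def gP2_def algebra_simps)
qed

lemma gt_vanish:
  assumes "s > 0" "i \<noteq> l" "2 * real l * s \<le> fst z" "fst z \<le> 2 * real l * s + s"
  shows "gt \<alpha> s i z = 0" "gP1 \<alpha> s i z = 0" "gP2 \<alpha> s i z = 0"
proof -
  have "fst z - 2 * real i * s \<ge> 2 * s \<or> fst z - 2 * real i * s \<le> - s"
  proof (cases "i < l")
    case True
    then have "real l - real i \<ge> 1" by linarith
    then have "2 * s \<le> 2 * (real l - real i) * s" using assms(1) by simp
    then show ?thesis using assms(3) by (auto simp: algebra_simps)
  next
    case False
    then have "real i - real l \<ge> 1" using assms(2) by linarith
    then have "2 * s \<le> 2 * (real i - real l) * s" using assms(1) by simp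
    then show ?thesis using assms(4) by (auto simp: algebra_simps)
  qed
  then show "gt \<alpha> s i z = 0" "gP1 \<alpha> s i z = 0" "gP2 \<alpha> s i z = 0"
    unfolding gt_def gP1_def gP2_def using hh_zero[OF assms(1)] by auto
qed

lemma sum_single:
  fixes l m :: nat
  assumes "l < m" "\<And>i. i < m \<Longrightarrow> i \<noteq> l \<Longrightarrow> G i = 0"
  shows "(\<Sum>i<m. c i * G i) = c l * (G l :: real)"
proof -
  have "(\<Sum>i<m. c i * G i) = c l * G l + (\<Sum>i\<in>{..<m} - {l}. c i * G i)"
    using assms(1) by (subst sum.remove[of _ l]) auto
  moreover have "(\<Sum>i\<in>{..<m} - {l}. c i * G i) = 0"
    by (rule sum.neutral) (use assms in auto)
  ultimately show ?thesis by simp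
qed

lemma lincomb_partials:
  assumes "\<And>i. i < n \<Longrightarrow> partials (f i) (P1 i) (P2 i)"
  shows "partials (lincomb f c n) (\<lambda>z. \<Sum>i<n. c i * P1 i z) (\<lambda>z. \<Sum>i<n. c i * P2 i z)"
  unfolding partials_def
proof (intro conjI allI)
  show "continuous_on UNIV (\<lambda>z. \<Sum>i<n. c i * P1 i z)"
    using assms unfolding partials_def by (intro continuous_intros) auto
  show "continuous_on UNIV (\<lambda>z. \<Sum>i<n. c i * P2 i z)"
    using assms unfolding partials_def by (intro continuous_intros) auto
  fix z
  have "((\<lambda>x. \<Sum>i<n. c i * f i x) has_derivative (\<lambda>v. \<Sum>i<n. c i * (fst v * P1 i z + snd v * P2 i z))) (at z)"
  proof -
    have hd: "(f i has_derivative (\<lambda>v. fst v * P1 i z + snd v * P2 i z)) (at z)" if "i < n" for i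
      using assms[OF that] unfolding partials_def by blast
    show ?thesis by (intro has_derivative_sum has_derivative_mult_right hd) simp
  qed
  then show "(lincomb f c n has_derivative (\<lambda>v. fst v * (\<Sum>i<n. c i * P1 i z) + snd v * (\<Sum>i<n. c i * P2 i z))) (at z)"
    unfolding lincomb_def
    by (rule has_derivative_eq_rhs) (auto simp: sum_distrib_left sum.distrib algebra_simps)
qed

lemma box_prod:
  fixes a b :: "real \<Rightarrow> real"
  assumes "continuous_on UNIV a" "continuous_on UNIV b"
  shows "integral (cbox (p,0) (p+s,s)) (\<lambda>z. (a (fst z - p) * b (snd z))\<^sup>2)
       = integral {0..s} (\<lambda>t. (a t)\<^sup>2) * integral {0..s} (\<lambda>t. (b t)\<^sup>2)"
proof -
  have ca: "continuous_on UNIV (\<lambda>z::real\<times>real. a (fst z - p))"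
    by (rule continuous_on_compose2[OF assms(1)]) (auto intro!: continuous_intros)
  have cb: "continuous_on UNIV (\<lambda>z::real\<times>real. b (snd z))"
    by (rule continuous_on_compose2[OF assms(2)]) (auto intro!: continuous_intros)
  have cg: "continuous_on UNIV (\<lambda>z::real\<times>real. (a (fst z - p) * b (snd z))\<^sup>2)"
    by (intro continuous_intros ca cb)
  have "integral (cbox (p,0) (p+s,s)) (\<lambda>z. (a (fst z - p) * b (snd z))\<^sup>2)
      = integral {p..p+s} (\<lambda>x. integral {0..s} (\<lambda>y. (a (x - p) * b y)\<^sup>2))"
    using fub_xy[OF cg, of p 0 "p+s" s] by simp
  also have "\<dots> = integral {p..p+s} (\<lambda>x. (a (x - p))\<^sup>2 * integral {0..s} (\<lambda>t. (b t)\<^sup>2))"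
    by (simp add: power_mult_distrib)
  also have "\<dots> = integral {p..p+s} (\<lambda>x. (a (x - p))\<^sup>2) * integral {0..s} (\<lambda>t. (b t)\<^sup>2)"
    by simp
  also have "integral {p..p+s} (\<lambda>x. (a (x - p))\<^sup>2) = integral {0..s} (\<lambda>t. (a t)\<^sup>2)"
    using shift_int[of s "\<lambda>x. (a (x - p))\<^sup>2" p] by simp
  finally show ?thesis .
qed

lemma sq_vals:
  assumes "\<alpha> > 0" "s > 0" "l < m"
  defines "Bm \<equiv> integral {0..s} (\<lambda>t. (phi \<alpha> s 0 t)\<^sup>2)"
  shows "robin_form_sq \<alpha> (2 * real l * s) s (lincomb (gt \<alpha> s) c m) = (c l)\<^sup>2 * (2 * mu \<alpha> s * Bm\<^sup>2)"
    "mass_sq (2 * real l * s) s (lincomb (gt \<alpha> s) c m) = (c l)\<^sup>2 * Bm\<^sup>2"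
proof -
  define p where "p = 2 * real l * s"
  define u where "u = lincomb (gt \<alpha> s) c m"
  define B where "B = cbox (p,0) (p+s,s)"
  define \<phi> where "\<phi> = phi \<alpha> s 0"
  define d\<phi> where "d\<phi> = dphi \<alpha> s 0"
  define A where "A = integral {0..s} (\<lambda>t. (d\<phi> t)\<^sup>2)"
  have Bm: "Bm = integral {0..s} (\<lambda>t. (\<phi> t)\<^sup>2)" unfolding Bm_def \<phi>_def ..
  have up: "partials u (\<lambda>z. \<Sum>i<m. c i * gP1 \<alpha> s i z) (\<lambda>z. \<Sum>i<m. c i * gP2 \<alpha> s i z)"
    unfolding u_def by (rule lincomb_partials, rule gt_partials[OF assms(2)])
  have vals: "u (x, y) = c l * (\<phi> (x - p) * \<phi> y)"
     "(\<Sum>i<m. c i * gP1 \<alpha> s i (x,y)) = c l * (d\<phi> (x - p) * \<phi> y)"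
     "(\<Sum>i<m. c i * gP2 \<alpha> s i (x,y)) = c l * (\<phi> (x - p) * d\<phi> y)"
    if "p \<le> x" "x \<le> p + s" for x y
  proof -
    have van: "gt \<alpha> s i (x,y) = 0" "gP1 \<alpha> s i (x,y) = 0" "gP2 \<alpha> s i (x,y) = 0" if "i \<noteq> l" for i
      using gt_vanish[OF assms(2) that, of "(x,y)"] \<open>p \<le> x\<close> \<open>x \<le> p + s\<close> unfolding p_def by auto
    have ho: "hh \<alpha> s (x - p) = \<phi> (x - p)" "dhh \<alpha> s (x - p) = d\<phi> (x - p)"
      using hh_on[OF assms(2), of "x - p" \<alpha>] that unfolding \<phi>_def d\<phi>_def by auto
    show "u (x, y) = c l * (\<phi> (x - p) * \<phi> y)"
      unfolding u_def lincomb_def using sum_single[OF assms(3), of "\<lambda>i. gt \<alpha> s i (x,y)" c] van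
      by (simp add: gt_def ho p_def[symmetric] \<phi>_def)
    show "(\<Sum>i<m. c i * gP1 \<alpha> s i (x,y)) = c l * (d\<phi> (x - p) * \<phi> y)"
      using sum_single[OF assms(3), of "\<lambda>i. gP1 \<alpha> s i (x,y)" c] van
      by (simp add: gP1_def ho p_def[symmetric] \<phi>_def)
    show "(\<Sum>i<m. c i * gP2 \<alpha> s i (x,y)) = c l * (\<phi> (x - p) * d\<phi> y)"
      using sum_single[OF assms(3), of "\<lambda>i. gP2 \<alpha> s i (x,y)" c] van
      by (simp add: gP2_def ho p_def[symmetric] \<phi>_def d\<phi>_def)
  qed
  have inB: "p \<le> fst z \<and> fst z \<le> p + s" if "z \<in> B" for z
    using that unfolding B_def cbox_Pair_eq by (auto simp: box_real)
  have c\<phi>: "continuous_on UNIV \<phi>" unfolding \<phi>_def by (rule phi_cont)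
  have cd\<phi>: "continuous_on UNIV d\<phi>" unfolding d\<phi>_def by (rule dphi_cont)
  have mass: "mass_sq p s u = (c l)\<^sup>2 * Bm\<^sup>2"
  proof -
    have "mass_sq p s u = integral B (\<lambda>z. (c l)\<^sup>2 * (\<phi> (fst z - p) * \<phi> (snd z))\<^sup>2)"
      unfolding mass_sq_def B_def[symmetric]
      by (rule Henstock_Kurzweil_Integration.integral_cong)
         (use vals inB in \<open>auto simp: power_mult_distrib\<close>)
    also have "\<dots> = (c l)\<^sup>2 * Bm\<^sup>2"
      unfolding B_def integral_mult_right box_prod[OF c\<phi> c\<phi>] Bm by (simp add: power2_eq_square)
    finally show ?thesis .
  qed
  have grad: "integral B (grad_sq u) = (c l)\<^sup>2 * (2 * A * Bm)"
  proof -
    have "integral B (grad_sq u) = integral B (\<lambda>z. (c l)\<^sup>2 * (d\<phi> (fst z - p) * \<phi> (snd z))\<^sup>2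
          + (c l)\<^sup>2 * (\<phi> (fst z - p) * d\<phi> (snd z))\<^sup>2)"
      unfolding partials_grad[OF up]
      by (rule Henstock_Kurzweil_Integration.integral_cong)
         (use vals inB in \<open>auto simp: power_mult_distrib\<close>)
    also have "\<dots> = (c l)\<^sup>2 * integral B (\<lambda>z. (d\<phi> (fst z - p) * \<phi> (snd z))\<^sup>2)
          + (c l)\<^sup>2 * integral B (\<lambda>z. (\<phi> (fst z - p) * d\<phi> (snd z))\<^sup>2)"
    proof -
      have ca: "continuous_on UNIV (\<lambda>z::real\<times>real. \<phi> (fst z - p))" "continuous_on UNIV (\<lambda>z::real\<times>real. d\<phi> (fst z - p))"
        by (rule continuous_on_compose2[OF c\<phi>] continuous_on_compose2[OF cd\<phi>], auto intro!: continuous_intros)+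
      have cb: "continuous_on UNIV (\<lambda>z::real\<times>real. \<phi> (snd z))" "continuous_on UNIV (\<lambda>z::real\<times>real. d\<phi> (snd z))"
        by (rule continuous_on_compose2[OF c\<phi>] continuous_on_compose2[OF cd\<phi>], auto intro!: continuous_intros)+
      show ?thesis unfolding B_def
        by (subst integral_add) (auto intro!: integrable_continuous continuous_intros continuous_on_subset[OF ca(1)]
            continuous_on_subset[OF ca(2)] continuous_on_subset[OF cb(1)] continuous_on_subset[OF cb(2)])
    qed
    also have "\<dots> = (c l)\<^sup>2 * (2 * A * Bm)"
      unfolding B_def box_prod[OF cd\<phi> c\<phi>] box_prod[OF c\<phi> cd\<phi>] A_def Bm by (simp add: algebra_simps)
    finally show ?thesis .
  qed
  have edge1: "integral {0..s} (\<lambda>t. (u (p+t, y0))\<^sup>2) = (c l)\<^sup>2 * (\<phi> y0)\<^sup>2 * Bm" for y0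
  proof -
    have "integral {0..s} (\<lambda>t. (u (p+t, y0))\<^sup>2) = integral {0..s} (\<lambda>t. ((c l)\<^sup>2 * (\<phi> y0)\<^sup>2) * (\<phi> t)\<^sup>2)"
      by (rule Henstock_Kurzweil_Integration.integral_cong) (use vals in \<open>auto simp: power_mult_distrib\<close>)
    then show ?thesis unfolding Bm by simp
  qed
  have edge2: "integral {0..s} (\<lambda>t. (u (p + x0, t))\<^sup>2) = (c l)\<^sup>2 * (\<phi> x0)\<^sup>2 * Bm"
    if "0 \<le> x0" "x0 \<le> s" for x0
  proof -
    have "integral {0..s} (\<lambda>t. (u (p + x0, t))\<^sup>2) = integral {0..s} (\<lambda>t. ((c l)\<^sup>2 * (\<phi> x0)\<^sup>2) * (\<phi> t)\<^sup>2)"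
      by (rule Henstock_Kurzweil_Integration.integral_cong) (use vals that in \<open>auto simp: power_mult_distrib\<close>)
    then show ?thesis unfolding Bm by simp
  qed
  have eig: "A + \<alpha> * ((\<phi> 0)\<^sup>2 + (\<phi> s)\<^sup>2) = mu \<alpha> s * Bm"
    using eigen_id[OF assms(1,2), of 0] unfolding A_def Bm \<phi>_def d\<phi>_def by simp
  have "robin_form_sq \<alpha> p s u = (c l)\<^sup>2 * (2 * A * Bm)
      + \<alpha> * ((c l)\<^sup>2 * (\<phi> 0)\<^sup>2 * Bm + (c l)\<^sup>2 * (\<phi> s)\<^sup>2 * Bm + (c l)\<^sup>2 * (\<phi> 0)\<^sup>2 * Bm + (c l)\<^sup>2 * (\<phi> s)\<^sup>2 * Bm)"
    unfolding robin_form_sq_def B_def[symmetric] grad edge1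
    using edge2[of 0] edge2[of s] assms(2) by simp
  also have "\<dots> = (c l)\<^sup>2 * 2 * Bm * (A + \<alpha> * ((\<phi> 0)\<^sup>2 + (\<phi> s)\<^sup>2))" by (simp add: algebra_simps)
  also have "\<dots> = (c l)\<^sup>2 * (2 * mu \<alpha> s * Bm\<^sup>2)" unfolding eig by (simp add: power2_eq_square)
  finally show "robin_form_sq \<alpha> (2 * real l * s) s (lincomb (gt \<alpha> s) c m) = (c l)\<^sup>2 * (2 * mu \<alpha> s * Bm\<^sup>2)"
    unfolding p_def u_def .
  show "mass_sq (2 * real l * s) s (lincomb (gt \<alpha> s) c m) = (c l)\<^sup>2 * Bm\<^sup>2"
    using mass unfolding p_def u_def .
qed

lemma sq_repr:
  assumes "\<And>i. i < m \<Longrightarrow> partials (f i) (P1 i) (P2 i)"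
  shows "robin_form_sq \<alpha> p s (lincomb f c m) = qf (\<lambda>i j.
        integral (cbox (p,0) (p+s,s)) (\<lambda>z. P1 i z * P1 j z) + integral (cbox (p,0) (p+s,s)) (\<lambda>z. P2 i z * P2 j z)
      + \<alpha> * (integral {0..s} (\<lambda>t. f i (p+t,0) * f j (p+t,0)) + integral {0..s} (\<lambda>t. f i (p+t,s) * f j (p+t,s))
           + integral {0..s} (\<lambda>t. f i (p,t) * f j (p,t)) + integral {0..s} (\<lambda>t. f i (p+s,t) * f j (p+s,t)))) m c"
    "mass_sq p s (lincomb f c m) = qf (\<lambda>i j. integral (cbox (p,0) (p+s,s)) (\<lambda>z. f i z * f j z)) m c"
proof -
  define B where "B = cbox (p,0) (p+s,s)"
  have up: "partials (lincomb f c m) (\<lambda>z. \<Sum>i<m. c i * P1 i z) (\<lambda>z. \<Sum>i<m. c i * P2 i z)"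
    by (rule lincomb_partials[OF assms])
  have cP1: "continuous_on UNIV (P1 i)" "continuous_on UNIV (P2 i)" "continuous_on UNIV (f i)" if "i < m" for i
    using assms[OF that] partials_cont[OF assms[OF that]] unfolding partials_def by auto
  have e1: "integral B (grad_sq (lincomb f c m)) = integral B (\<lambda>z. (\<Sum>i<m. c i * P1 i z)\<^sup>2) + integral B (\<lambda>z. (\<Sum>i<m. c i * P2 i z)\<^sup>2)"
    unfolding partials_grad[OF up] B_def
    by (intro integral_add integrable_continuous continuous_intros continuous_on_subset[OF cP1(1)]
        continuous_on_subset[OF cP1(2)]) auto
  have q1: "integral B (\<lambda>z. (\<Sum>i<m. c i * P1 i z)\<^sup>2) = qf (\<lambda>i j. integral B (\<lambda>z. P1 i z * P1 j z)) m c"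
    unfolding B_def by (rule int_quad) (use cP1 continuous_on_subset in blast)
  have q2: "integral B (\<lambda>z. (\<Sum>i<m. c i * P2 i z)\<^sup>2) = qf (\<lambda>i j. integral B (\<lambda>z. P2 i z * P2 j z)) m c"
    unfolding B_def by (rule int_quad) (use cP1 continuous_on_subset in blast)
  have edge: "integral {0..s} (\<lambda>t. (lincomb f c m (\<gamma> t))\<^sup>2) = qf (\<lambda>i j. integral {0..s} (\<lambda>t. f i (\<gamma> t) * f j (\<gamma> t))) m c"
    if "continuous_on UNIV \<gamma>" for \<gamma> :: "real \<Rightarrow> real \<times> real"
    unfolding lincomb_def
    by (rule int_quad_real) (auto intro!: continuous_on_compose2[OF cP1(3)] continuous_on_subset[OF that])
  have g1: "continuous_on UNIV (\<lambda>t::real. (p+t, c0))" "continuous_on UNIV (\<lambda>t::real. (c0, t))" for c0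
    by (auto intro!: continuous_intros)
  show "robin_form_sq \<alpha> p s (lincomb f c m) = qf (\<lambda>i j.
        integral (cbox (p,0) (p+s,s)) (\<lambda>z. P1 i z * P1 j z) + integral (cbox (p,0) (p+s,s)) (\<lambda>z. P2 i z * P2 j z)
      + \<alpha> * (integral {0..s} (\<lambda>t. f i (p+t,0) * f j (p+t,0)) + integral {0..s} (\<lambda>t. f i (p+t,s) * f j (p+t,s))
           + integral {0..s} (\<lambda>t. f i (p,t) * f j (p,t)) + integral {0..s} (\<lambda>t. f i (p+s,t) * f j (p+s,t)))) m c"
    unfolding robin_form_sq_def B_def[symmetric] e1 q1 q2
      edge[OF g1(1)[of 0]] edge[OF g1(1)[of s]] edge[OF g1(2)[of p]] edge[OF g1(2)[of "p+s"]]
    by (simp add: qf_add qf_scale)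
  show "mass_sq p s (lincomb f c m) = qf (\<lambda>i j. integral (cbox (p,0) (p+s,s)) (\<lambda>z. f i z * f j z)) m c"
    unfolding mass_sq_def lincomb_def by (rule int_quad) (use cP1 continuous_on_subset in blast)
qed

lemma squares_eig:
  assumes "\<alpha> > 0" "s > 0" "m \<ge> 1"
  shows "robin_eig_squares \<alpha> m s m = 2 * mu \<alpha> s"
proof -
  define Q where "Q = (\<lambda>u. \<Sum>i<m. robin_form_sq \<alpha> (2 * real i * s) s u)"
  define M where "M = (\<lambda>u. \<Sum>i<m. mass_sq (2 * real i * s) s u)"
  have eq: "robin_eig_squares \<alpha> m s m = minmax_level C1_plane Q M m"
    unfolding robin_eig_squares_def Q_def M_def ..
  have parts: "\<And>i. i < m \<Longrightarrow> partials (f i) (\<lambda>z. frechet_derivative (f i) (at z) (1,0)) (\<lambda>z. frechet_derivative (f i) (at z) (0,1))"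
    if "adm C1_plane M m f" for f
    using that C1_plane_partials unfolding adm_def by blast
  have rep: "quad_repr Q m f \<and> quad_repr M m f" if "adm C1_plane M m f" for f
  proof -
    note sr = sq_repr[OF parts[OF that]]
    show ?thesis unfolding quad_repr_def Q_def M_def
    proof (intro conjI exI allI)
      fix c
      show "(\<Sum>i<m. robin_form_sq \<alpha> (2 * real i * s) s (lincomb f c m)) = qf (\<lambda>a b. \<Sum>l<m. (\<lambda>i j.
        integral (cbox (2 * real l * s,0) (2 * real l * s+s,s)) (\<lambda>z. frechet_derivative (f i) (at z) (1,0) * frechet_derivative (f j) (at z) (1,0))
        + integral (cbox (2 * real l * s,0) (2 * real l * s+s,s)) (\<lambda>z. frechet_derivative (f i) (at z) (0,1) * frechet_derivative (f j) (at z) (0,1))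
      + \<alpha> * (integral {0..s} (\<lambda>t. f i (2 * real l * s+t,0) * f j (2 * real l * s+t,0)) + integral {0..s} (\<lambda>t. f i (2 * real l * s+t,s) * f j (2 * real l * s+t,s))
           + integral {0..s} (\<lambda>t. f i (2 * real l * s,t) * f j (2 * real l * s,t)) + integral {0..s} (\<lambda>t. f i (2 * real l * s+s,t) * f j (2 * real l * s+s,t)))) a b) m c"
        unfolding qf_sum[OF finite_lessThan] by (rule sum.cong[OF refl], rule sr(1))
      show "(\<Sum>i<m. mass_sq (2 * real i * s) s (lincomb f c m)) = qf (\<lambda>a b. \<Sum>l<m. (\<lambda>i j.
        integral (cbox (2 * real l * s,0) (2 * real l * s+s,s)) (\<lambda>z. f i z * f j z)) a b) m c"
        unfolding qf_sum[OF finite_lessThan] by (rule sum.cong[OF refl], rule sr(2))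
    qed
  qed
  have low: "\<exists>c. (\<exists>i<m. c i \<noteq> 0) \<and> 2 * mu \<alpha> s * M (lincomb f c m) \<le> Q (lincomb f c m)"
    if "adm C1_plane M m f" for f
  proof -
    define c :: "nat \<Rightarrow> real" where "c = (\<lambda>_. 1)"
    have up: "partials (lincomb f c m) (\<lambda>z. \<Sum>i<m. c i * frechet_derivative (f i) (at z) (1,0))
                 (\<lambda>z. \<Sum>i<m. c i * frechet_derivative (f i) (at z) (0,1))"
      by (rule lincomb_partials[OF parts[OF that]])
    have "2 * mu \<alpha> s * M (lincomb f c m) = (\<Sum>i<m. 2 * mu \<alpha> s * mass_sq (2 * real i * s) s (lincomb f c m))"
      unfolding M_def sum_distrib_left ..
    also have "\<dots> \<le> Q (lincomb f c m)" unfolding Q_def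
      by (intro sum_mono square_low[OF assms(1,2) up])
    finally show ?thesis using assms(3) by (intro exI[of _ c]) (auto simp: c_def intro!: exI[of _ 0])
  qed
  define Bm where "Bm = integral {0..s} (\<lambda>t. (phi \<alpha> s 0 t)\<^sup>2)"
  have Bm0: "Bm > 0" using phi_mass_pos[OF assms(2), where \<alpha>=\<alpha> and p=0] unfolding Bm_def by simp
  have Mg: "M (lincomb (gt \<alpha> s) c m) = Bm\<^sup>2 * (\<Sum>l<m. (c l)\<^sup>2)" for c
    unfolding M_def sum_distrib_left by (intro sum.cong refl) (simp add: sq_vals(2)[OF assms(1,2)] Bm_def)
  have Qg: "Q (lincomb (gt \<alpha> s) c m) = 2 * mu \<alpha> s * M (lincomb (gt \<alpha> s) c m)" for c
    unfolding Q_def Mg sum_distrib_left by (intro sum.cong refl) (simp add: sq_vals(1)[OF assms(1,2)] Bm_def)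
  have adm0: "adm C1_plane M m (gt \<alpha> s)"
    unfolding adm_def
  proof (intro conjI allI impI)
    fix i show "i < m \<Longrightarrow> C1_plane (gt \<alpha> s i)" using partials_C1_plane[OF gt_partials[OF assms(2)]] by blast
  next
    fix c :: "nat \<Rightarrow> real" assume "\<exists>i<m. c i \<noteq> 0"
    then obtain i where i: "i < m" "c i \<noteq> 0" by blast
    have "(\<Sum>l<m. (c l)\<^sup>2) > 0" by (rule sum_pos2[of _ i]) (use i in auto)
    then show "M (lincomb (gt \<alpha> s) c m) > 0" unfolding Mg using Bm0 by simp
  qed
  have "2 * mu \<alpha> s \<le> minmax_level C1_plane Q M m"
    by (rule minmax_lower) (use adm0 rep low in blast)+
  moreover have "minmax_level C1_plane Q M m \<le> 2 * mu \<alpha> s"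
    by (rule minmax_upper[OF _ _ adm0 assms(3)]) (use rep low Qg in auto)
  ultimately show ?thesis unfolding eq by simp
qed


theorem lemma7p1:
  fixes \<alpha> A a :: real and k :: nat
  assumes "\<alpha> > 0" and "A > 0" and "k \<ge> 2" and "a \<ge> 1"
  shows "robin_eig_interval \<alpha> (sqrt A * a) k + robin_eig_interval \<alpha> (sqrt A / a) 1
           \<ge> robin_eig_squares \<alpha> 1 (sqrt (A / real k)) 1
       \<and> robin_eig_squares \<alpha> 1 (sqrt (A / real k)) 1
           = robin_eig_squares \<alpha> k (sqrt (A / real k)) k"
proof -
  define s where "s = sqrt (A / real k)"
  define x where "x = sqrt A * a / real k"
  define y where "y = sqrt A / a"
  have k0: "real k > 0" using assms(3) by simp
  have s0: "s > 0" unfolding s_def using assms k0 by simp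
  have x0: "x > 0" unfolding x_def using assms k0 by simp
  have y0: "y > 0" unfolding y_def using assms by simp
  have sq1: "robin_eig_squares \<alpha> 1 s 1 = 2 * mu \<alpha> s" by (rule squares_eig[OF assms(1) s0]) simp
  have sqk: "robin_eig_squares \<alpha> k s k = 2 * mu \<alpha> s" by (rule squares_eig[OF assms(1) s0]) (use assms(3) in simp)
  have xy: "sqrt (x * y) = s"
  proof -
    have "x * y = A / real k" unfolding x_def y_def using assms k0
      by (simp add: field_simps power2_eq_square[symmetric])
    then show ?thesis unfolding s_def by simp
  qed
  have L1: "mu \<alpha> x \<le> robin_eig_interval \<alpha> (sqrt A * a) k"
    using interval_lower[OF assms(1), of "sqrt A * a" k] assms unfolding x_def by simp
  have L2: "mu \<alpha> y \<le> robin_eig_interval \<alpha> (sqrt A / a) 1"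
    using interval_lower[OF assms(1), of "sqrt A / a" 1] assms unfolding y_def by simp
  have C: "2 * mu \<alpha> s \<le> mu \<alpha> x + mu \<alpha> y" using mu_convex[OF assms(1) x0 y0] unfolding xy .
  show ?thesis using L1 L2 C sq1 sqk unfolding s_def[symmetric] by simp
qed


end
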